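(* Let $\omega\in\mathbb{R}^2$ have incommensurable entries, let $1/2<s_2\le1$, $s_1>\frac{3s_2}{2s_2-1}$, and $u_0\in H^{s_1,s_2}_\omega$ real-valued. For $n\in\mathbb{N}$ let $u_n$ be the global smooth solution of the regularized equation $u_t=-P_nH\partial_x^2u+P_n\partial_x(P_nu\,P_nu)$ with initial data $u_n(0)=P_{\delta(n)^{1/s_1},\delta(n)^{1/s_2}}u_0$, where $\delta(n)\le n$ is an increasing function of $n$. There exists a time $T=T(\|u_0\|_{H^{s_1,s_2}_\omega})>0$ such that $$\|u_n\|_{L^\infty([0,T],H^{s_1,s_2}_\omega)}\le2\|u_0\|_{H^{s_1,s_2}_\omega}$$ uniformly in $n$. Further, $T$ can be taken uniformly for initial data from a compact subset of $H^{s_1,s_2}_\omega$.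
   Context: $\mathbb{T}^2=\mathbb{R}^2/\mathbb{Z}^2$ with Fourier coefficients $\hat u(k)$, $k\in\mathbb{Z}^2$; $\omega^\perp=(\omega_2,-\omega_1)$. Multipliers: $\partial_x$ (symbol $2\pi i\,\omega\cdot k$), $\langle\partial_x\rangle^s$ (symbol $\langle\omega\cdot k\rangle^s$), $\langle\partial_y\rangle^s$ (symbol $\langle\omega^\perp\cdot k\rangle^s$), $\langle a\rangle=(1+|a|^2)^{1/2}$; $H=-i(P_+-P_-)$, $P_\pm$ with symbol $1_{\{\pm\omega\cdot k>0\}}$. For $q,r>0$, $P_{q,r}$ is the Fourier projection onto modes $k$ with $|\omega\cdot k|\le q$ and $|\omega^\perp\cdot k|\le r$, and $P_n=P_{n,n}$. $H^{s_1,s_2}_\omega$ is the closure of $C^\infty(\mathbb{T}^2)$ under $\|\langle\partial_x\rangle^{s_1}u\|_{L^2}+\|\langle\partial_y\rangle^{s_2}u\|_{L^2}$. *)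

theory Defs
  imports "HOL-Analysis.Analysis"
begin

text \<open>Functions on the torus are represented by their Fourier coefficients
  u k, k in Z^2, with u(x) = sum_k u k * exp(2 pi i k.x).\<close>

type_synonym coeffs = "int \<times> int \<Rightarrow> complex"

definition incommensurable :: "real \<times> real \<Rightarrow> bool" where
  "incommensurable \<omega> \<longleftrightarrow>
     (\<forall>a b :: int. real_of_int a * fst \<omega> + real_of_int b * snd \<omega> = 0 \<longrightarrow> a = 0 \<and> b = 0)"

text \<open>omega . k and omega-perp . k, with omega-perp = (omega2, -omega1).\<close>
definition wdot :: "real \<times> real \<Rightarrow> int \<times> int \<Rightarrow> real" where
  "wdot \<omega> k = fst \<omega> * real_of_int (fst k) + snd \<omega> * real_of_int (snd k)"

definition wpdot :: "real \<times> real \<Rightarrow> int \<times> int \<Rightarrow> real" where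
  "wpdot \<omega> k = snd \<omega> * real_of_int (fst k) - fst \<omega> * real_of_int (snd k)"

definition jbr :: "real \<Rightarrow> real" where
  "jbr a = sqrt (1 + a\<^sup>2)"

definition fmult :: "(int \<times> int \<Rightarrow> complex) \<Rightarrow> coeffs \<Rightarrow> coeffs" where
  "fmult m u = (\<lambda>k. m k * u k)"

definition dx_sym :: "real \<times> real \<Rightarrow> int \<times> int \<Rightarrow> complex" where
  "dx_sym \<omega> k = 2 * complex_of_real pi * \<i> * complex_of_real (wdot \<omega> k)"

definition hilbert_sym :: "real \<times> real \<Rightarrow> int \<times> int \<Rightarrow> complex" where
  "hilbert_sym \<omega> k = - \<i> * ((if wdot \<omega> k > 0 then 1 else 0) - (if wdot \<omega> k < 0 then 1 else 0))"

definition Pqr_sym :: "real \<times> real \<Rightarrow> real \<Rightarrow> real \<Rightarrow> int \<times> int \<Rightarrow> complex" where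
  "Pqr_sym \<omega> q r k = (if \<bar>wdot \<omega> k\<bar> \<le> q \<and> \<bar>wpdot \<omega> k\<bar> \<le> r then 1 else 0)"

definition Pqr :: "real \<times> real \<Rightarrow> real \<Rightarrow> real \<Rightarrow> coeffs \<Rightarrow> coeffs" where
  "Pqr \<omega> q r = fmult (Pqr_sym \<omega> q r)"

definition Pn :: "real \<times> real \<Rightarrow> nat \<Rightarrow> coeffs \<Rightarrow> coeffs" where
  "Pn \<omega> n = Pqr \<omega> (real n) (real n)"

definition Dx :: "real \<times> real \<Rightarrow> coeffs \<Rightarrow> coeffs" where
  "Dx \<omega> = fmult (dx_sym \<omega>)"

definition Hilb :: "real \<times> real \<Rightarrow> coeffs \<Rightarrow> coeffs" where
  "Hilb \<omega> = fmult (hilbert_sym \<omega>)"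

text \<open>Fourier coefficients of the pointwise product of two functions.\<close>
definition conv :: "coeffs \<Rightarrow> coeffs \<Rightarrow> coeffs" where
  "conv f g = (\<lambda>k. \<Sum>\<^sub>\<infinity>j. f j * g (fst k - fst j, snd k - snd j))"

definition reg_rhs :: "real \<times> real \<Rightarrow> nat \<Rightarrow> coeffs \<Rightarrow> coeffs" where
  "reg_rhs \<omega> n u = (\<lambda>k. - Pn \<omega> n (Hilb \<omega> (Dx \<omega> (Dx \<omega> u))) k
                        + Pn \<omega> n (Dx \<omega> (conv (Pn \<omega> n u) (Pn \<omega> n u))) k)"

definition is_reg_solution :: "real \<times> real \<Rightarrow> nat \<Rightarrow> coeffs \<Rightarrow> (real \<Rightarrow> coeffs) \<Rightarrow> bool" where
  "is_reg_solution \<omega> n v0 u \<longleftrightarrow>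
     u 0 = v0 \<and>
     (\<forall>t\<ge>0. \<forall>k. ((\<lambda>\<tau>. u \<tau> k) has_vector_derivative reg_rhs \<omega> n (u t) k) (at t within {0..}))"

text \<open>Real-valuedness in terms of Fourier coefficients.\<close>
definition realvalued :: "coeffs \<Rightarrow> bool" where
  "realvalued u \<longleftrightarrow> (\<forall>k. u (- fst k, - snd k) = cnj (u k))"

text \<open>The anisotropic space H^{s1,s2}_omega (via Parseval) and its norm
  ||<dx>^s1 u||_L2 + ||<dy>^s2 u||_L2.\<close>
definition Hspace :: "real \<times> real \<Rightarrow> real \<Rightarrow> real \<Rightarrow> coeffs set" where
  "Hspace \<omega> s1 s2 = {u.
     (\<lambda>k. jbr (wdot \<omega> k) powr (2 * s1) * (cmod (u k))\<^sup>2) summable_on UNIV \<and>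
     (\<lambda>k. jbr (wpdot \<omega> k) powr (2 * s2) * (cmod (u k))\<^sup>2) summable_on UNIV}"

definition Hnorm :: "real \<times> real \<Rightarrow> real \<Rightarrow> real \<Rightarrow> coeffs \<Rightarrow> real" where
  "Hnorm \<omega> s1 s2 u =
     sqrt (\<Sum>\<^sub>\<infinity>k. jbr (wdot \<omega> k) powr (2 * s1) * (cmod (u k))\<^sup>2)
   + sqrt (\<Sum>\<^sub>\<infinity>k. jbr (wpdot \<omega> k) powr (2 * s2) * (cmod (u k))\<^sup>2)"

text \<open>Compactness of K in the normed space H^{s1,s2}_omega (sequential compactness,
  equivalent to compactness in a metric space).\<close>
definition Hcompact :: "real \<times> real \<Rightarrow> real \<Rightarrow> real \<Rightarrow> coeffs set \<Rightarrow> bool" where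
  "Hcompact \<omega> s1 s2 K \<longleftrightarrow> K \<subseteq> Hspace \<omega> s1 s2 \<and>
     (\<forall>x :: nat \<Rightarrow> coeffs. (\<forall>i. x i \<in> K) \<longrightarrow>
        (\<exists>r l. strict_mono r \<and> l \<in> K \<and> (\<lambda>i. Hnorm \<omega> s1 s2 (x (r i) - l)) \<longlonglongrightarrow> 0))"

definition admissible_delta :: "(nat \<Rightarrow> real) \<Rightarrow> bool" where
  "admissible_delta \<delta> \<longleftrightarrow> (\<forall>n\<ge>1. 0 < \<delta> n \<and> \<delta> n \<le> real n) \<and> mono_on {1..} \<delta>"

definition reg_family :: "real \<times> real \<Rightarrow> real \<Rightarrow> real \<Rightarrow> (nat \<Rightarrow> real) \<Rightarrow> coeffs
     \<Rightarrow> (nat \<Rightarrow> real \<Rightarrow> coeffs) \<Rightarrow> bool" where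
  "reg_family \<omega> s1 s2 \<delta> u0 u \<longleftrightarrow>
     (\<forall>n\<ge>1. is_reg_solution \<omega> n (Pqr \<omega> (\<delta> n powr (1 / s1)) (\<delta> n powr (1 / s2)) u0) (u n))"

end

theory Submission
  imports Defs
begin

lemma wdot_add: "wdot w (a + b) = wdot w a + wdot w b"
  by (simp add: wdot_def algebra_simps)
lemma wpdot_add: "wpdot w (a + b) = wpdot w a + wpdot w b"
  by (simp add: wpdot_def algebra_simps)
lemma wdot_uminus: "wdot w (- a) = - wdot w a"
  by (simp add: wdot_def algebra_simps)
lemma wpdot_uminus: "wpdot w (- a) = - wpdot w a"
  by (simp add: wpdot_def algebra_simps)
lemma wdot_diff: "wdot w (a - b) = wdot w a - wdot w b"
  by (simp add: wdot_def algebra_simps)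
lemma wpdot_diff: "wpdot w (a - b) = wpdot w a - wpdot w b"
  by (simp add: wpdot_def algebra_simps)
lemma minus_pair_eq: "(fst k - fst j, snd k - snd j) = k - (j::int\<times>int)"
  by (simp add: minus_prod_def)
lemma uminus_pair_eq: "(- fst k, - snd k) = - (k::int\<times>int)"
  by (simp add: uminus_prod_def)

lemma wnorm_identity:
  "(wdot w k)\<^sup>2 + (wpdot w k)\<^sup>2 = ((fst w)\<^sup>2 + (snd w)\<^sup>2) * ((real_of_int (fst k))\<^sup>2 + (real_of_int (snd k))\<^sup>2)"
  by (simp add: wdot_def wpdot_def power2_eq_square algebra_simps)

lemma incomm_nonzero: "incommensurable w \<Longrightarrow> (fst w)\<^sup>2 + (snd w)\<^sup>2 > 0"
proof -
  assume a: "incommensurable w"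
  have "w \<noteq> (0,0)"
  proof
    assume "w = (0,0)"
    then have "real_of_int 1 * fst w + real_of_int 0 * snd w = 0" by simp
    moreover from a have "real_of_int 1 * fst w + real_of_int 0 * snd w = 0 \<longrightarrow> (1::int) = 0 \<and> (0::int) = 0"
      unfolding incommensurable_def by blast
    ultimately show False by simp
  qed
  then have "fst w \<noteq> 0 \<or> snd w \<noteq> 0" by (cases w) auto
  then show ?thesis
  proof
    assume "fst w \<noteq> 0" then have "(fst w)\<^sup>2 > 0" by simp
    then show ?thesis using zero_le_power2[of "snd w"] by linarith
  next
    assume "snd w \<noteq> 0" then have "(snd w)\<^sup>2 > 0" by simp
    then show ?thesis using zero_le_power2[of "fst w"] by linarith
  qed
qed

definition Sset :: "real \<times> real \<Rightarrow> real \<Rightarrow> (int \<times> int) set" where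
  "Sset w n = {k. \<bar>wdot w k\<bar> \<le> n \<and> \<bar>wpdot w k\<bar> \<le> n}"

lemma Sset_uminus: "k \<in> Sset w n \<Longrightarrow> - k \<in> Sset w n"
  by (simp add: Sset_def wdot_uminus wpdot_uminus)

lemma int_abs_le_sq: "\<bar>real_of_int m\<bar> \<le> (real_of_int m)\<^sup>2"
proof -
  have "m = 0 \<or> 1 \<le> \<bar>m\<bar>" by auto
  then have "\<bar>m\<bar> \<le> \<bar>m\<bar> * \<bar>m\<bar>" using mult_right_mono[of 1 "\<bar>m\<bar>" "\<bar>m\<bar>"] by auto
  then have "\<bar>real_of_int m\<bar> \<le> \<bar>real_of_int m\<bar> * \<bar>real_of_int m\<bar>" by (metis of_int_abs of_int_le_iff of_int_mult)
  then show ?thesis by (simp add: power2_eq_square abs_mult_self_eq)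
qed

lemma finite_Sset:
  assumes "incommensurable w"
  shows "finite (Sset w n)"
proof -
  define c where "c = (fst w)\<^sup>2 + (snd w)\<^sup>2"
  have c: "c > 0" using incomm_nonzero[OF assms] c_def by simp
  define M where "M = \<lceil>2 * n\<^sup>2 / c\<rceil>"
  have "Sset w n \<subseteq> {-M..M} \<times> {-M..M}"
  proof
    fix k assume k: "k \<in> Sset w n"
    have "(wdot w k)\<^sup>2 + (wpdot w k)\<^sup>2 \<le> 2 * n\<^sup>2"
    proof -
      have "\<bar>wdot w k\<bar> \<le> n" "\<bar>wpdot w k\<bar> \<le> n" using k unfolding Sset_def by auto
      then have "(wdot w k)\<^sup>2 \<le> n\<^sup>2" "(wpdot w k)\<^sup>2 \<le> n\<^sup>2" by (metis abs_ge_zero power2_abs power_mono)+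
      then show ?thesis by simp
    qed
    then have "c * ((real_of_int (fst k))\<^sup>2 + (real_of_int (snd k))\<^sup>2) \<le> 2 * n\<^sup>2"
      using wnorm_identity[of w k] c_def by simp
    then have h: "(real_of_int (fst k))\<^sup>2 + (real_of_int (snd k))\<^sup>2 \<le> 2 * n\<^sup>2 / c"
      using c by (simp add: field_simps)
    have "\<bar>real_of_int (fst k)\<bar> \<le> 2 * n\<^sup>2 / c" using h int_abs_le_sq[of "fst k"] zero_le_power2[of "real_of_int (snd k)"] by linarith
    then have "real_of_int \<bar>fst k\<bar> \<le> real_of_int M" using le_of_int_ceiling[of "2 * n\<^sup>2 / c"] unfolding M_def by linarith
    then have 1: "\<bar>fst k\<bar> \<le> M" by linarith
    have "\<bar>real_of_int (snd k)\<bar> \<le> 2 * n\<^sup>2 / c" using h int_abs_le_sq[of "snd k"] zero_le_power2[of "real_of_int (fst k)"] by linarith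
    then have "real_of_int \<bar>snd k\<bar> \<le> real_of_int M" using le_of_int_ceiling[of "2 * n\<^sup>2 / c"] unfolding M_def by linarith
    then have "\<bar>snd k\<bar> \<le> M" by linarith
    with 1 show "k \<in> {-M..M} \<times> {-M..M}" by (cases k) (auto simp: abs_le_iff)
  qed
  then show ?thesis by (rule finite_subset) auto
qed

lemma deriv_nonneg_mono:
  fixes g g' :: "real \<Rightarrow> real"
  assumes T: "0 \<le> T"
    and d: "\<And>t. t \<in> {0..T} \<Longrightarrow> (g has_real_derivative g' t) (at t within {0..})"
    and nn: "\<And>t. t \<in> {0..T} \<Longrightarrow> g' t \<ge> 0"
  shows "g 0 \<le> g T"
proof (rule DERIV_nonneg_imp_increasing_open[OF T])
  fix x assume x: "0 < x" "x < T"
  have "x \<in> interior {0::real..}" using x by simp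
  then have "at x within {0..} = at x" by (rule at_within_interior)
  then show "\<exists>y. DERIV g x :> y \<and> y \<ge> 0" using d[of x] nn[of x] x by auto
next
  show "continuous_on {0..T} g"
    unfolding continuous_on_eq_continuous_within
  proof
    fix t assume t: "t \<in> {0..T}"
    have "continuous (at t within {0..}) g" using d[OF t] by (rule DERIV_continuous)
    then show "continuous (at t within {0..T}) g" by (rule continuous_within_subset) auto
  qed
qed

lemma gronwall0:
  fixes f f' :: "real \<Rightarrow> real"
  assumes T: "0 \<le> T"
    and d: "\<And>t. t \<in> {0..T} \<Longrightarrow> (f has_real_derivative f' t) (at t within {0..})"
    and le: "\<And>t. t \<in> {0..T} \<Longrightarrow> f' t \<le> L * f t"
    and nn: "\<And>t. t \<in> {0..T} \<Longrightarrow> 0 \<le> f t"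
    and f0: "f 0 = 0"
  shows "f T = 0"
proof -
  define g where "g s = - exp (- L * s) * f s" for s
  have "g 0 \<le> g T"
  proof (rule deriv_nonneg_mono[OF T])
    fix t assume t: "t \<in> {0..T}"
    show "(g has_real_derivative (exp (- L * t) * (L * f t - f' t))) (at t within {0..})"
      unfolding g_def
      by (rule derivative_eq_intros refl d[OF t] | simp add: algebra_simps)+
    show "exp (- L * t) * (L * f t - f' t) \<ge> 0" using le[OF t] by simp
  qed
  then have "0 \<le> - exp (- L * T) * f T" by (simp add: g_def f0)
  then have "f T \<le> 0" by (simp add: mult_le_0_iff)
  with nn[of T] T show ?thesis by simp
qed

definition Tset :: "(int \<times> int) set \<Rightarrow> ((int \<times> int) \<times> (int \<times> int)) set" where
  "Tset S = {p \<in> S \<times> S. fst p + snd p \<in> S}"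

lemma finite_Tset: "finite S \<Longrightarrow> finite (Tset S)"
  unfolding Tset_def by (rule finite_subset[of _ "S \<times> S"]) auto

lemma Tset_swap:
  fixes F :: "int \<times> int \<Rightarrow> int \<times> int \<Rightarrow> 'c::comm_monoid_add"
  shows "(\<Sum>(a,b)\<in>Tset S. F a b) = (\<Sum>(a,b)\<in>Tset S. F b a)"
  by (rule sum.reindex_bij_witness[where i="\<lambda>(a,b). (b,a)" and j="\<lambda>(a,b). (b,a)"])
     (auto simp: Tset_def add.commute)

lemma Tset_refl:
  fixes F :: "int \<times> int \<Rightarrow> int \<times> int \<Rightarrow> 'c::comm_monoid_add"
  assumes sym: "\<And>k. k \<in> S \<Longrightarrow> - k \<in> S"
  shows "(\<Sum>(a,b)\<in>Tset S. F a b) = (\<Sum>(a,b)\<in>Tset S. F (- a) (a + b))"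
proof -
  have symp: "\<And>a b. (a,b) \<in> S \<Longrightarrow> (-a,-b) \<in> S" using sym by (metis uminus_pair_eq fst_conv snd_conv)
  show ?thesis
  by (rule sum.reindex_bij_witness[where i="\<lambda>(a,b). (- a, a + b)" and j="\<lambda>(a,b). (- a, a + b)"])
     (auto simp: Tset_def symp)
qed

lemma conv_reindex:
  fixes G v :: "int \<times> int \<Rightarrow> complex"
  assumes fin: "finite S"
    and v0: "\<And>k. k \<notin> S \<Longrightarrow> v k = 0"
  shows "(\<Sum>k\<in>S. G k * (\<Sum>j\<in>S. v j * v (k - j))) = (\<Sum>(a,b)\<in>Tset S. G (a + b) * v a * v b)"
proof -
  have "(\<Sum>k\<in>S. G k * (\<Sum>j\<in>S. v j * v (k - j))) = (\<Sum>(k,j)\<in>S \<times> S. G k * v j * v (k - j))"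
    by (simp add: sum_distrib_left sum.cartesian_product mult.assoc)
  also have "\<dots> = (\<Sum>(k,j)\<in>{p \<in> S \<times> S. fst p - snd p \<in> S}. G k * v j * v (k - j))"
  proof (rule sum.mono_neutral_right)
    show "finite (S \<times> S)" using fin by simp
    show "{p \<in> S \<times> S. fst p - snd p \<in> S} \<subseteq> S \<times> S" by auto
    show "\<forall>p\<in>S \<times> S - {p \<in> S \<times> S. fst p - snd p \<in> S}. (case p of (k, j) \<Rightarrow> G k * v j * v (k - j)) = 0"
    proof
      fix p assume "p \<in> S \<times> S - {p \<in> S \<times> S. fst p - snd p \<in> S}"
      then have "v (fst p - snd p) = 0" using v0 by auto
      then show "(case p of (k, j) \<Rightarrow> G k * v j * v (k - j)) = 0" by (cases p) simp
    qed
  qed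
  also have "\<dots> = (\<Sum>(a,b)\<in>Tset S. G (a + b) * v a * v b)"
    by (rule sum.reindex_bij_witness[where i="\<lambda>(a,b). (a + b, a)" and j="\<lambda>(k,j). (j, k - j)"])
       (auto simp: Tset_def)
  finally show ?thesis .
qed

lemma shift_sq_le:
  fixes A :: "int \<times> int \<Rightarrow> real"
  assumes fin: "finite S"
  shows "(\<Sum>b\<in>{b \<in> S. a + b \<in> S}. (A (a + b))\<^sup>2) \<le> (\<Sum>c\<in>S. (A c)\<^sup>2)"
proof -
  have "(\<Sum>b\<in>{b \<in> S. a + b \<in> S}. (A (a + b))\<^sup>2) = (\<Sum>c\<in>(\<lambda>b. a + b) ` {b \<in> S. a + b \<in> S}. (A c)\<^sup>2)"
    by (subst sum.reindex) (auto simp: inj_on_def)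
  also have "\<dots> \<le> (\<Sum>c\<in>S. (A c)\<^sup>2)"
    by (rule sum_mono2[OF fin]) auto
  finally show ?thesis .
qed

lemma trilinear_bound:
  fixes A B g :: "int \<times> int \<Rightarrow> real"
  assumes fin: "finite S"
    and g0: "\<And>k. g k \<ge> 0"
  shows "(\<Sum>(a,b)\<in>Tset S. \<bar>A (a + b)\<bar> * g a * \<bar>B b\<bar>)
           \<le> (\<Sum>a\<in>S. g a) * (((\<Sum>c\<in>S. (A c)\<^sup>2) + (\<Sum>c\<in>S. (B c)\<^sup>2)) / 2)"
proof -
  have TS: "Tset S = Sigma S (\<lambda>a. {b \<in> S. a + b \<in> S})" by (auto simp: Tset_def)
  have "(\<Sum>(a,b)\<in>Tset S. \<bar>A (a + b)\<bar> * g a * \<bar>B b\<bar>)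
        = (\<Sum>a\<in>S. g a * (\<Sum>b\<in>{b \<in> S. a + b \<in> S}. \<bar>A (a + b)\<bar> * \<bar>B b\<bar>))"
    unfolding TS by (subst sum.Sigma[symmetric]) (auto simp: fin sum_distrib_left intro!: sum.cong)
  also have "\<dots> \<le> (\<Sum>a\<in>S. g a * (((\<Sum>c\<in>S. (A c)\<^sup>2) + (\<Sum>c\<in>S. (B c)\<^sup>2)) / 2))"
  proof (rule sum_mono, rule mult_left_mono[OF _ g0])
    fix a assume "a \<in> S"
    have "(\<Sum>b\<in>{b \<in> S. a + b \<in> S}. \<bar>A (a + b)\<bar> * \<bar>B b\<bar>)
          \<le> (\<Sum>b\<in>{b \<in> S. a + b \<in> S}. ((A (a + b))\<^sup>2 + (B b)\<^sup>2) / 2)"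
    proof (rule sum_mono)
      fix b
      have "0 \<le> (\<bar>A (a + b)\<bar> - \<bar>B b\<bar>)\<^sup>2" by simp
      then show "\<bar>A (a + b)\<bar> * \<bar>B b\<bar> \<le> ((A (a + b))\<^sup>2 + (B b)\<^sup>2) / 2"
        by (simp add: power2_eq_square algebra_simps)
    qed
    also have "\<dots> = ((\<Sum>b\<in>{b \<in> S. a + b \<in> S}. (A (a + b))\<^sup>2) + (\<Sum>b\<in>{b \<in> S. a + b \<in> S}. (B b)\<^sup>2)) / 2"
      by (simp add: sum.distrib add_divide_distrib flip: sum_divide_distrib)
    also have "\<dots> \<le> ((\<Sum>c\<in>S. (A c)\<^sup>2) + (\<Sum>c\<in>S. (B c)\<^sup>2)) / 2"
    proof -
      have "(\<Sum>b\<in>{b \<in> S. a + b \<in> S}. (B b)\<^sup>2) \<le> (\<Sum>c\<in>S. (B c)\<^sup>2)"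
        by (rule sum_mono2[OF fin]) auto
      then show ?thesis using shift_sq_le[OF fin, where a=a and A=A] by simp
    qed
    finally show "(\<Sum>b\<in>{b \<in> S. a + b \<in> S}. \<bar>A (a + b)\<bar> * \<bar>B b\<bar>) \<le> ((\<Sum>c\<in>S. (A c)\<^sup>2) + (\<Sum>c\<in>S. (B c)\<^sup>2)) / 2" .
  qed
  also have "\<dots> = (\<Sum>a\<in>S. g a) * (((\<Sum>c\<in>S. (A c)\<^sup>2) + (\<Sum>c\<in>S. (B c)\<^sup>2)) / 2)"
    by (simp add: sum_distrib_right)
  finally show ?thesis .
qed

lemma trilinear_bound2:
  fixes A B g :: "int \<times> int \<Rightarrow> real"
  assumes fin: "finite S"
    and g0: "\<And>k. g k \<ge> 0"
  shows "(\<Sum>(a,b)\<in>Tset S. \<bar>A (a + b)\<bar> * \<bar>B a\<bar> * g b)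
           \<le> (\<Sum>a\<in>S. g a) * (((\<Sum>c\<in>S. (A c)\<^sup>2) + (\<Sum>c\<in>S. (B c)\<^sup>2)) / 2)"
proof -
  have "(\<Sum>(a,b)\<in>Tset S. \<bar>A (a + b)\<bar> * \<bar>B a\<bar> * g b) = (\<Sum>(a,b)\<in>Tset S. \<bar>A (b + a)\<bar> * \<bar>B b\<bar> * g a)"
    by (rule Tset_swap)
  also have "\<dots> = (\<Sum>(a,b)\<in>Tset S. \<bar>A (a + b)\<bar> * g a * \<bar>B b\<bar>)"
    by (simp add: add.commute mult.commute mult.left_commute)
  also have "\<dots> \<le> (\<Sum>a\<in>S. g a) * (((\<Sum>c\<in>S. (A c)\<^sup>2) + (\<Sum>c\<in>S. (B c)\<^sup>2)) / 2)"
    by (rule trilinear_bound[OF fin g0])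
  finally show ?thesis .
qed

lemma cmod_prod4: "cmod (complex_of_real r * z1 * z2 * z3) = \<bar>r\<bar> * cmod z1 * cmod z2 * cmod z3"
  by (simp add: norm_mult)

lemma cancel_est:
  fixes v :: "int \<times> int \<Rightarrow> complex" and lam xi :: "int \<times> int \<Rightarrow> real"
  assumes fin: "finite S" and sym: "\<And>k. k \<in> S \<Longrightarrow> - k \<in> S"
    and v0: "\<And>k. k \<notin> S \<Longrightarrow> v k = 0"
    and vr: "\<And>k. v (- k) = cnj (v k)"
    and lsym: "\<And>k. lam (- k) = lam k"
    and lnn: "\<And>k. lam k \<ge> 0"
    and xadd: "\<And>a b. xi (a + b) = xi a + xi b"
    and K: "K \<ge> 0"
    and cond: "\<And>a b. \<bar>lam (a + b) - lam b\<bar> * \<bar>xi b\<bar> \<le> K * (lam a * \<bar>xi b\<bar> + \<bar>xi a\<bar> * lam b)"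
  shows "\<bar>Im (\<Sum>(a,b)\<in>Tset S. complex_of_real ((lam (a + b))\<^sup>2) * cnj (v (a + b)) * complex_of_real (xi (a + b)) * v a * v b)\<bar>
         \<le> (4 * K + 1) * (\<Sum>a\<in>S. \<bar>xi a\<bar> * cmod (v a)) * (\<Sum>c\<in>S. (lam c)\<^sup>2 * (cmod (v c))\<^sup>2)"
proof -
  define A where "A c = lam c * cmod (v c)" for c
  define g where "g c = \<bar>xi c\<bar> * cmod (v c)" for c
  define E where "E = (\<Sum>c\<in>S. (A c)\<^sup>2)"
  define G where "G = (\<Sum>a\<in>S. g a)"
  have g0: "\<And>c. g c \<ge> 0" by (simp add: g_def)
  have A0: "\<And>c. A c \<ge> 0" by (simp add: A_def lnn)
  have E0: "E \<ge> 0" by (simp add: E_def sum_nonneg)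
  have G0: "G \<ge> 0" by (simp add: G_def g0 sum_nonneg)
  have EE: "(\<Sum>c\<in>S. (lam c)\<^sup>2 * (cmod (v c))\<^sup>2) = E" by (simp add: E_def A_def power_mult_distrib)
  have GG: "(\<Sum>a\<in>S. \<bar>xi a\<bar> * cmod (v a)) = G" by (simp add: G_def g_def)
  have xi0: "xi 0 = 0" using xadd[of 0 0] by simp
  have xneg: "\<And>a. xi (- a) = - xi a" using xadd xi0 by (metis add.right_inverse add_eq_0_iff)
  have tri1: "(\<Sum>(a,b)\<in>Tset S. \<bar>A (a + b)\<bar> * g a * \<bar>A b\<bar>) \<le> G * E"
    using trilinear_bound[OF fin g0, where A=A and B=A] by (simp add: G_def E_def)
  have tri2: "(\<Sum>(a,b)\<in>Tset S. \<bar>A (a + b)\<bar> * \<bar>A a\<bar> * g b) \<le> G * E"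
    using trilinear_bound2[OF fin g0, where A=A and B=A] by (simp add: G_def E_def)
  define N where "N = (\<Sum>(a,b)\<in>Tset S. complex_of_real ((lam (a + b))\<^sup>2) * cnj (v (a + b)) * complex_of_real (xi (a + b)) * v a * v b)"
  define N1 where "N1 = (\<Sum>(a,b)\<in>Tset S. complex_of_real ((lam (a + b))\<^sup>2) * cnj (v (a + b)) * complex_of_real (xi b) * v a * v b)"
  define N2 where "N2 = (\<Sum>(a,b)\<in>Tset S. complex_of_real ((lam (a + b))\<^sup>2) * cnj (v (a + b)) * complex_of_real (xi a) * v a * v b)"
  have "N = N2 + N1"
    unfolding N_def N1_def N2_def by (simp add: xadd sum.distrib[symmetric] split_def algebra_simps)
  moreover have "N2 = N1"
    unfolding N2_def N1_def by (subst Tset_swap) (simp add: add.commute mult.commute mult.left_commute)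
  ultimately have NN: "N = 2 * N1" by simp
  define P where "P = (\<Sum>(a,b)\<in>Tset S. complex_of_real (lam (a + b) * (lam (a + b) - lam b) * xi b) * cnj (v (a + b)) * v a * v b)"
  define X where "X = (\<Sum>(a,b)\<in>Tset S. complex_of_real (lam (a + b) * lam b * xi b) * cnj (v (a + b)) * v b * v a)"
  define Y where "Y = (\<Sum>(a,b)\<in>Tset S. complex_of_real (lam (a + b) * lam b * xi (a + b)) * cnj (v (a + b)) * v b * v a)"
  have N1PX: "N1 = P + X"
    unfolding N1_def P_def X_def by (simp add: sum.distrib[symmetric] split_def algebra_simps power2_eq_square)
  have "cmod P \<le> (\<Sum>(a,b)\<in>Tset S. K * (\<bar>A (a + b)\<bar> * \<bar>A a\<bar> * g b + \<bar>A (a + b)\<bar> * g a * \<bar>A b\<bar>))"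
    unfolding P_def
  proof (rule order_trans[OF norm_sum], rule sum_mono)
    fix p assume "p \<in> Tset S"
    obtain a b where p: "p = (a, b)" by (cases p)
    have "cmod (complex_of_real (lam (a + b) * (lam (a + b) - lam b) * xi b) * cnj (v (a + b)) * v a * v b)
        = A (a + b) * cmod (v a) * cmod (v b) * (\<bar>lam (a + b) - lam b\<bar> * \<bar>xi b\<bar>)"
      by (subst cmod_prod4) (simp add: abs_mult A_def lnn mult_ac)
    also have "\<dots> \<le> A (a + b) * cmod (v a) * cmod (v b) * (K * (lam a * \<bar>xi b\<bar> + \<bar>xi a\<bar> * lam b))"
      by (rule mult_left_mono[OF cond]) (simp add: A0)
    also have "\<dots> = K * (\<bar>A (a + b)\<bar> * \<bar>A a\<bar> * g b + \<bar>A (a + b)\<bar> * g a * \<bar>A b\<bar>)"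
      by (simp add: A_def g_def lnn algebra_simps)
    finally show "cmod (case p of (a, b) \<Rightarrow> complex_of_real (lam (a + b) * (lam (a + b) - lam b) * xi b) * cnj (v (a + b)) * v a * v b)
         \<le> (case p of (a, b) \<Rightarrow> K * (\<bar>A (a + b)\<bar> * \<bar>A a\<bar> * g b + \<bar>A (a + b)\<bar> * g a * \<bar>A b\<bar>))"
      by (simp add: p)
  qed
  also have "\<dots> = K * ((\<Sum>(a,b)\<in>Tset S. \<bar>A (a + b)\<bar> * \<bar>A a\<bar> * g b) + (\<Sum>(a,b)\<in>Tset S. \<bar>A (a + b)\<bar> * g a * \<bar>A b\<bar>))"
    by (simp only: sum_distrib_left[symmetric] sum.distrib[symmetric] split_def)
  also have "\<dots> \<le> K * (G * E + G * E)"
    using tri1 tri2 K by (intro mult_left_mono add_mono) auto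
  finally have Pb: "cmod P \<le> 2 * K * G * E" by (simp add: mult_ac)
  have "cnj X = Y"
  proof -
    have "cnj X = (\<Sum>(a,b)\<in>Tset S. complex_of_real (lam (a + b) * lam b * xi b) * v (a + b) * cnj (v b) * v (- a))"
      unfolding X_def by (simp add: split_def vr)
    also have "\<dots> = (\<Sum>(a,b)\<in>Tset S. complex_of_real (lam (- a + (a + b)) * lam (a + b) * xi (a + b)) * v (- a + (a + b)) * cnj (v (a + b)) * v (- (- a)))"
      by (rule Tset_refl[OF sym, where F = "\<lambda>a b. complex_of_real (lam (a + b) * lam b * xi b) * v (a + b) * cnj (v b) * v (- a)"])
    also have "\<dots> = (\<Sum>(a,b)\<in>Tset S. complex_of_real (lam b * lam (a + b) * xi (a + b)) * v b * cnj (v (a + b)) * v a)"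
      by (simp add: algebra_simps)
    also have "\<dots> = Y"
      unfolding Y_def
    proof (rule sum.cong[OF refl])
      fix p assume "p \<in> Tset S"
      obtain a b where p: "p = (a, b)" by (cases p)
      show "(case p of (a, b) \<Rightarrow> complex_of_real (lam b * lam (a + b) * xi (a + b)) * v b * cnj (v (a + b)) * v a)
          = (case p of (a, b) \<Rightarrow> complex_of_real (lam (a + b) * lam b * xi (a + b)) * cnj (v (a + b)) * v b * v a)"
        by (simp add: p mult_ac)
    qed
    finally show ?thesis .
  qed
  have "X - Y = (\<Sum>(a,b)\<in>Tset S. complex_of_real (lam (a + b) * lam b * xi b) * cnj (v (a + b)) * v b * v a
       - complex_of_real (lam (a + b) * lam b * xi (a + b)) * cnj (v (a + b)) * v b * v a)"
    unfolding X_def Y_def by (simp add: sum_subtractf split_def)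
  then have "cmod (X - Y) \<le> (\<Sum>(a,b)\<in>Tset S. \<bar>A (a + b)\<bar> * g a * \<bar>A b\<bar>)"
  proof (simp only:, intro order_trans[OF norm_sum] sum_mono)
    fix p assume "p \<in> Tset S"
    obtain a b where p: "p = (a, b)" by (cases p)
    have "complex_of_real (lam (a + b) * lam b * xi b) * cnj (v (a + b)) * v b * v a
       - complex_of_real (lam (a + b) * lam b * xi (a + b)) * cnj (v (a + b)) * v b * v a
       = complex_of_real (- (lam (a + b) * lam b * xi a)) * cnj (v (a + b)) * v b * v a"
      by (simp add: xadd algebra_simps)
    then have "cmod (complex_of_real (lam (a + b) * lam b * xi b) * cnj (v (a + b)) * v b * v a
       - complex_of_real (lam (a + b) * lam b * xi (a + b)) * cnj (v (a + b)) * v b * v a)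
       = \<bar>A (a + b)\<bar> * g a * \<bar>A b\<bar>"
      by (simp only: cmod_prod4) (simp add: A_def g_def abs_mult lnn mult_ac)
    then show "cmod (case p of (a, b) \<Rightarrow> complex_of_real (lam (a + b) * lam b * xi b) * cnj (v (a + b)) * v b * v a
       - complex_of_real (lam (a + b) * lam b * xi (a + b)) * cnj (v (a + b)) * v b * v a)
       \<le> (case p of (a, b) \<Rightarrow> \<bar>A (a + b)\<bar> * g a * \<bar>A b\<bar>)" by (simp add: p)
  qed
  with tri1 have XYb: "cmod (X - Y) \<le> G * E" by linarith
  have "X - Y = complex_of_real (2 * Im X) * \<i>"
    using \<open>cnj X = Y\<close>[symmetric] by (simp add: complex_eq_iff)
  then have "cmod (X - Y) = 2 * \<bar>Im X\<bar>" by (simp add: norm_mult)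
  with XYb have ImX: "\<bar>Im X\<bar> \<le> G * E / 2" by simp
  have "Im N = 2 * (Im P + Im X)" using NN N1PX by simp
  then have "\<bar>Im N\<bar> = 2 * \<bar>Im P + Im X\<bar>" by (simp only: abs_mult)
  also have "\<dots> \<le> 2 * (cmod P + \<bar>Im X\<bar>)"
    using abs_Im_le_cmod[of P] abs_triangle_ineq[of "Im P" "Im X"] by (smt (verit))
  also have "\<dots> \<le> 2 * (2 * K * G * E + G * E / 2)" using Pb ImX by (smt (verit))
  also have "\<dots> = (4 * K + 1) * G * E" by (simp add: algebra_simps)
  finally show ?thesis unfolding N_def EE GG by simp
qed

lemma jbr_norm: "jbr a = norm ((1::real), a)"
  by (simp add: jbr_def norm_Pair)
lemma jbr_ge1: "jbr a \<ge> 1"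
  by (simp add: jbr_def)
lemma jbr_pos: "jbr a > 0"
  using jbr_ge1[of a] by linarith
lemma abs_le_jbr: "\<bar>a\<bar> \<le> jbr a"
  unfolding jbr_def by (rule real_le_rsqrt) simp
lemma jbr_lip: "\<bar>jbr a - jbr b\<bar> \<le> \<bar>a - b\<bar>"
proof -
  have "\<bar>norm ((1::real), a) - norm ((1::real), b)\<bar> \<le> norm ((1::real, a) - (1, b))"
    by (rule norm_triangle_ineq3)
  also have "(1::real, a) - (1, b) = (0, a - b)" by simp
  finally show ?thesis by (simp add: jbr_norm norm_Pair)
qed
lemma jbr_add: "jbr (x + y) \<le> jbr x + jbr y"
proof -
  have "jbr (x + y) - jbr x \<le> \<bar>y\<bar>" using jbr_lip[of "x + y" x] by simp
  then show ?thesis using abs_le_jbr[of y] by linarith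
qed
lemma jbr_uminus: "jbr (- a) = jbr a"
  by (simp add: jbr_def)

lemma powr_subadd:
  fixes a b s :: real
  assumes a: "0 \<le> a" and b: "0 \<le> b" and s: "0 < s" "s \<le> 1"
  shows "(a + b) powr s \<le> a powr s + b powr s"
proof (cases "a = 0 \<or> b = 0")
  case True then show ?thesis using a b by auto
next
  case False
  then have a': "a > 0" and b': "b > 0" using a b by auto
  have "(a + b) powr s = (a + b) * (a + b) powr (s - 1)"
    using a' b' by (simp add: powr_diff field_simps)
  also have "\<dots> = a * (a + b) powr (s - 1) + b * (a + b) powr (s - 1)" by (simp add: algebra_simps)
  also have "\<dots> \<le> a * a powr (s - 1) + b * b powr (s - 1)"
  proof (rule add_mono)
    show "a * (a + b) powr (s - 1) \<le> a * a powr (s - 1)"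
      using a' b' s by (intro mult_left_mono powr_mono2') auto
    show "b * (a + b) powr (s - 1) \<le> b * b powr (s - 1)"
      using a' b' s by (intro mult_left_mono powr_mono2') auto
  qed
  also have "\<dots> = a powr s + b powr s"
    using a' b' by (simp add: powr_diff field_simps)
  finally show ?thesis .
qed

lemma lam_y_cond:
  fixes s :: real
  assumes s: "0 < s" "s \<le> 1"
  shows "\<bar>jbr (x + y) powr s - jbr y powr s\<bar> \<le> jbr x powr s"
proof -
  define A where "A = jbr (x + y)"
  define B where "B = jbr y"
  have A1: "A \<ge> 1" and B1: "B \<ge> 1" by (simp_all add: A_def B_def jbr_ge1)
  have AB: "\<bar>A - B\<bar> \<le> jbr x"
    using jbr_lip[of "x + y" y] abs_le_jbr[of x] by (simp add: A_def B_def)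
  show ?thesis
  proof (cases "B \<le> A")
    case True
    have "A powr s = (B + (A - B)) powr s" by simp
    also have "\<dots> \<le> B powr s + (A - B) powr s" using True B1 s by (intro powr_subadd) auto
    also have "(A - B) powr s \<le> jbr x powr s" using True AB s by (intro powr_mono2) auto
    finally have "A powr s - B powr s \<le> jbr x powr s" by simp
    moreover have "B powr s \<le> A powr s" using True B1 s by (intro powr_mono2) auto
    ultimately show ?thesis by (simp add: A_def B_def)
  next
    case False
    have "B powr s = (A + (B - A)) powr s" by simp
    also have "\<dots> \<le> A powr s + (B - A) powr s" using False A1 s by (intro powr_subadd) auto
    also have "(B - A) powr s \<le> jbr x powr s" using False AB s by (intro powr_mono2) auto
    finally have "B powr s - A powr s \<le> jbr x powr s" by simp
    moreover have "A powr s \<le> B powr s" using False A1 s by (intro powr_mono2) auto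
    ultimately show ?thesis by (simp add: A_def B_def)
  qed
qed

lemma powr_mvt_bound:
  fixes A B s :: real
  assumes A: "A \<ge> 1" and B: "B \<ge> 1" and s: "s \<ge> 1"
  shows "\<bar>A powr s - B powr s\<bar> \<le> s * \<bar>A - B\<bar> * (max A B) powr (s - 1)"
proof -
  have main: "Y powr s - X powr s \<le> s * (Y - X) * Y powr (s - 1)" if XY: "1 \<le> X" "X < Y" for X Y :: real
  proof -
    have "\<exists>z. X < z \<and> z < Y \<and> Y powr s - X powr s = (Y - X) * (s * z powr (s - 1))"
      by (rule MVT2[OF \<open>X < Y\<close>]) (use XY in \<open>auto intro!: derivative_eq_intros\<close>)
    then obtain z where z: "X < z" "z < Y" "Y powr s - X powr s = (Y - X) * (s * z powr (s - 1))" by blast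
    have "z powr (s - 1) \<le> Y powr (s - 1)" using z XY s by (intro powr_mono2) auto
    then have "(Y - X) * (s * z powr (s - 1)) \<le> (Y - X) * (s * Y powr (s - 1))"
      using XY s by (intro mult_left_mono) auto
    with z show ?thesis by (simp add: algebra_simps)
  qed
  consider "A = B" | "B < A" | "A < B" by linarith
  then show ?thesis
  proof cases
    case 1 then show ?thesis using s by simp
  next
    case 2
    have "B powr s \<le> A powr s" using 2 B s by (intro powr_mono2) auto
    then show ?thesis using main[OF B 2] 2 by (simp add: max_def)
  next
    case 3
    have "A powr s \<le> B powr s" using 3 A s by (intro powr_mono2) auto
    then show ?thesis using main[OF A 3] 3 by (simp add: max_def abs_minus_commute)
  qed
qed

lemma lam_x_cond:
  fixes s :: real
  assumes s: "s \<ge> 1"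
  shows "\<bar>jbr (x + y) powr s - jbr y powr s\<bar> * \<bar>y\<bar>
         \<le> (s * 2 powr (s - 1)) * (jbr x powr s * \<bar>y\<bar> + \<bar>x\<bar> * jbr y powr s)"
proof -
  define A where "A = jbr (x + y)"
  define B where "B = jbr y"
  have A1: "A \<ge> 1" and B1: "B \<ge> 1" by (simp_all add: A_def B_def jbr_ge1)
  have AB: "\<bar>A - B\<bar> \<le> \<bar>x\<bar>"
    using jbr_lip[of "x + y" y] by (simp add: A_def B_def)
  have M: "max A B \<le> 2 * max (jbr x) (jbr y)"
    using jbr_add[of x y] jbr_ge1[of x] jbr_ge1[of y] by (simp add: A_def B_def max_def)
  have "max A B powr (s - 1) \<le> (2 * max (jbr x) (jbr y)) powr (s - 1)"
    using M A1 s by (intro powr_mono2) auto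
  also have "\<dots> = 2 powr (s - 1) * max (jbr x) (jbr y) powr (s - 1)"
    using jbr_pos[of x] by (simp add: powr_mult)
  also have "max (jbr x) (jbr y) powr (s - 1) \<le> jbr x powr (s - 1) + jbr y powr (s - 1)"
    by (simp add: max_def)
  finally have M2: "max A B powr (s - 1) \<le> 2 powr (s - 1) * (jbr x powr (s - 1) + jbr y powr (s - 1))"
    by simp
  have X1: "\<bar>x\<bar> * jbr x powr (s - 1) \<le> jbr x powr s"
  proof -
    have "\<bar>x\<bar> * jbr x powr (s - 1) \<le> jbr x * jbr x powr (s - 1)"
      using abs_le_jbr[of x] by (intro mult_right_mono) auto
    also have "\<dots> = jbr x powr s" using jbr_pos[of x] by (simp add: powr_diff field_simps)
    finally show ?thesis .
  qed
  have Y1: "\<bar>y\<bar> * jbr y powr (s - 1) \<le> jbr y powr s"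
  proof -
    have "\<bar>y\<bar> * jbr y powr (s - 1) \<le> jbr y * jbr y powr (s - 1)"
      using abs_le_jbr[of y] by (intro mult_right_mono) auto
    also have "\<dots> = jbr y powr s" using jbr_pos[of y] by (simp add: powr_diff field_simps)
    finally show ?thesis .
  qed
  have "\<bar>A powr s - B powr s\<bar> * \<bar>y\<bar> \<le> (s * \<bar>A - B\<bar> * (max A B) powr (s - 1)) * \<bar>y\<bar>"
    using powr_mvt_bound[OF A1 B1 s] by (intro mult_right_mono) auto
  also have "\<dots> \<le> (s * \<bar>x\<bar> * (2 powr (s - 1) * (jbr x powr (s - 1) + jbr y powr (s - 1)))) * \<bar>y\<bar>"
    using AB M2 s by (intro mult_right_mono mult_mono) auto
  also have "\<dots> = (s * 2 powr (s - 1)) * ((\<bar>x\<bar> * jbr x powr (s - 1)) * \<bar>y\<bar> + \<bar>x\<bar> * (\<bar>y\<bar> * jbr y powr (s - 1)))"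
    by (simp add: algebra_simps)
  also have "\<dots> \<le> (s * 2 powr (s - 1)) * (jbr x powr s * \<bar>y\<bar> + \<bar>x\<bar> * jbr y powr s)"
    using X1 Y1 s by (intro mult_left_mono add_mono mult_right_mono mult_left_mono) auto
  finally show ?thesis by (simp add: A_def B_def)
qed

lemma int_powr_sum_bound:
  fixes \<alpha> :: real
  assumes a: "\<alpha> > 1"
  shows "\<exists>Z. \<forall>M. finite M \<longrightarrow> (\<Sum>m\<in>M. (1 + \<bar>real_of_int m\<bar>) powr (- \<alpha>)) \<le> Z"
proof -
  define f where "f n = (1 + real n) powr (- \<alpha>)" for n :: nat
  have "summable (\<lambda>n. real n powr (- \<alpha>))" using a by (simp add: summable_real_powr_iff)
  then have "summable (\<lambda>n. real (Suc n) powr (- \<alpha>))" by (subst summable_Suc_iff)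
  then have sf: "summable f" unfolding f_def by (simp add: add.commute)
  have f0: "\<And>n. f n \<ge> 0" by (simp add: f_def)
  have part: "(\<Sum>m\<in>N. f (nat \<bar>m\<bar>)) \<le> suminf f" if N: "finite N" "inj_on (\<lambda>m. nat \<bar>m\<bar>) N" for N :: "int set"
  proof -
    have "(\<Sum>m\<in>N. f (nat \<bar>m\<bar>)) = (\<Sum>n\<in>(\<lambda>m. nat \<bar>m\<bar>) ` N. f n)"
      using N by (simp add: sum.reindex)
    also have "\<dots> \<le> suminf f" using N sf f0 by (intro sum_le_suminf) auto
    finally show ?thesis .
  qed
  show ?thesis
  proof (intro exI allI impI)
    fix M :: "int set" assume M: "finite M"
    have eq: "\<And>m. (1 + \<bar>real_of_int m\<bar>) powr (- \<alpha>) = f (nat \<bar>m\<bar>)"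
      by (simp add: f_def)
    have "(\<Sum>m\<in>M. (1 + \<bar>real_of_int m\<bar>) powr (- \<alpha>)) = (\<Sum>m\<in>M. f (nat \<bar>m\<bar>))" by (simp add: eq)
    also have "\<dots> = (\<Sum>m\<in>{m\<in>M. 0 \<le> m}. f (nat \<bar>m\<bar>)) + (\<Sum>m\<in>{m\<in>M. \<not> 0 \<le> m}. f (nat \<bar>m\<bar>))"
    proof -
      have "M = {m\<in>M. 0 \<le> m} \<union> {m\<in>M. \<not> 0 \<le> m}" by auto
      then show ?thesis using M by (subst sum.union_disjoint[symmetric]) auto
    qed
    also have "\<dots> \<le> suminf f + suminf f"
      using M by (intro add_mono part) (auto simp: inj_on_def)
    finally show "(\<Sum>m\<in>M. (1 + \<bar>real_of_int m\<bar>) powr (- \<alpha>)) \<le> 2 * suminf f" by simp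
  qed
qed

lemma floor_bound:
  fixes h x :: real
  assumes h: "0 < h" "h \<le> 1"
  shows "(h / 2) * (1 + \<bar>real_of_int \<lfloor>x / h\<rfloor>\<bar>) \<le> 1 + \<bar>x\<bar>"
proof -
  define m where "m = real_of_int \<lfloor>x / h\<rfloor>"
  have "m \<le> x / h" "x / h < m + 1" unfolding m_def by linarith+
  then have "\<bar>m\<bar> \<le> \<bar>x / h\<bar> + 1" by linarith
  then have "(h / 2) * (1 + \<bar>m\<bar>) \<le> (h / 2) * (2 + \<bar>x / h\<bar>)" using h by (intro mult_left_mono) auto
  also have "\<dots> = h + \<bar>x\<bar> / 2" using h by (simp add: field_simps abs_divide)
  also have "\<dots> \<le> 1 + \<bar>x\<bar>" using h by simp
  finally show ?thesis by (simp add: m_def)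
qed

lemma lattice_sum_bound:
  fixes w :: "real \<times> real" and \<alpha> \<beta> :: real
  assumes c: "(fst w)\<^sup>2 + (snd w)\<^sup>2 > 0" and a: "\<alpha> > 1" and b: "\<beta> > 1"
  shows "\<exists>C. \<forall>F. finite F \<longrightarrow>
     (\<Sum>k\<in>F. (1 + \<bar>wdot w k\<bar>) powr (- \<alpha>) * (1 + \<bar>wpdot w k\<bar>) powr (- \<beta>)) \<le> C"
proof -
  obtain Za where Za: "\<And>M. finite M \<Longrightarrow> (\<Sum>m\<in>M. (1 + \<bar>real_of_int m\<bar>) powr (- \<alpha>)) \<le> Za"
    using int_powr_sum_bound[OF a] by blast
  obtain Zb where Zb: "\<And>M. finite M \<Longrightarrow> (\<Sum>m\<in>M. (1 + \<bar>real_of_int m\<bar>) powr (- \<beta>)) \<le> Zb"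
    using int_powr_sum_bound[OF b] by blast
  have Zb0: "Zb \<ge> 0" using Zb[of "{}"] by simp
  have Za0: "Za \<ge> 0" using Za[of "{}"] by simp
  define c0 where "c0 = (fst w)\<^sup>2 + (snd w)\<^sup>2"
  have c0: "c0 > 0" using c by (simp add: c0_def)
  define h where "h = min 1 (sqrt c0 / 2)"
  have h0: "h > 0" using c0 by (simp add: h_def)
  have h1: "h \<le> 1" by (simp add: h_def)
  have h2: "h\<^sup>2 \<le> c0 / 4"
  proof -
    have "h \<le> sqrt c0 / 2" by (simp add: h_def)
    then have "h\<^sup>2 \<le> (sqrt c0 / 2)\<^sup>2" using h0 by (intro power_mono) auto
    also have "\<dots> = c0 / 4" using c0 by (simp add: power_divide)
    finally show ?thesis .
  qed
  define \<phi> where "\<phi> k = (\<lfloor>wdot w k / h\<rfloor>, \<lfloor>wpdot w k / h\<rfloor>)" for k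
  have inj: "inj \<phi>"
  proof (rule injI)
    fix k k' assume eq: "\<phi> k = \<phi> k'"
    have close: "\<bar>x - x'\<bar> < h" if "\<lfloor>x / h\<rfloor> = \<lfloor>x' / h\<rfloor>" for x x' :: real
    proof -
      have "\<bar>x / h - x' / h\<bar> < 1" using that by linarith
      then have "\<bar>(x - x') / h\<bar> < 1" by (simp add: diff_divide_distrib)
      then show ?thesis using h0 by (simp add: abs_divide)
    qed
    have d1: "\<bar>wdot w k - wdot w k'\<bar> < h" using eq close by (simp add: \<phi>_def)
    have d2: "\<bar>wpdot w k - wpdot w k'\<bar> < h" using eq close by (simp add: \<phi>_def)
    have "\<bar>wdot w (k - k')\<bar> < h" using d1 by (simp add: wdot_diff)
    then have "(wdot w (k - k'))\<^sup>2 < h\<^sup>2" using power_strict_mono[of "\<bar>wdot w (k - k')\<bar>" h 2] by simp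
    moreover have "\<bar>wpdot w (k - k')\<bar> < h" using d2 by (simp add: wpdot_diff)
    then have "(wpdot w (k - k'))\<^sup>2 < h\<^sup>2" using power_strict_mono[of "\<bar>wpdot w (k - k')\<bar>" h 2] by simp
    ultimately have "c0 * ((real_of_int (fst (k - k')))\<^sup>2 + (real_of_int (snd (k - k')))\<^sup>2) < c0 * (1 / 2)"
      using wnorm_identity[of w "k - k'"] h2 unfolding c0_def by linarith
    then have lt: "(real_of_int (fst (k - k')))\<^sup>2 + (real_of_int (snd (k - k')))\<^sup>2 < 1 / 2"
      using c0 by simp
    have "fst (k - k') = 0"
    proof (rule ccontr)
      assume "fst (k - k') \<noteq> 0"
      then have "1 \<le> \<bar>fst (k - k')\<bar>" by linarith
      then have "1 \<le> \<bar>real_of_int (fst (k - k'))\<bar>" by linarith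
      then have "1 \<le> (real_of_int (fst (k - k')))\<^sup>2" using int_abs_le_sq by (metis order_trans)
      with lt show False using zero_le_power2[of "real_of_int (snd (k - k'))"] by linarith
    qed
    moreover have "snd (k - k') = 0"
    proof (rule ccontr)
      assume "snd (k - k') \<noteq> 0"
      then have "1 \<le> \<bar>snd (k - k')\<bar>" by linarith
      then have "1 \<le> \<bar>real_of_int (snd (k - k'))\<bar>" by linarith
      then have "1 \<le> (real_of_int (snd (k - k')))\<^sup>2" using int_abs_le_sq by (metis order_trans)
      with lt show False using zero_le_power2[of "real_of_int (fst (k - k'))"] by linarith
    qed
    ultimately show "k = k'" by (simp add: prod_eq_iff)
  qed
  define g where "g p = (1 + \<bar>real_of_int (fst p)\<bar>) powr (- \<alpha>) * (1 + \<bar>real_of_int (snd p)\<bar>) powr (- \<beta>)" for p :: "int \<times> int"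
  define D where "D = (h / 2) powr (- \<alpha>) * (h / 2) powr (- \<beta>)"
  have D0: "D \<ge> 0" by (simp add: D_def)
  have pw: "(1 + \<bar>x\<bar>) powr (- \<gamma>) \<le> (h / 2) powr (- \<gamma>) * (1 + \<bar>real_of_int \<lfloor>x / h\<rfloor>\<bar>) powr (- \<gamma>)"
    if g: "\<gamma> > 0" for x \<gamma> :: real
  proof -
    have "(1 + \<bar>x\<bar>) powr (- \<gamma>) \<le> ((h / 2) * (1 + \<bar>real_of_int \<lfloor>x / h\<rfloor>\<bar>)) powr (- \<gamma>)"
      using floor_bound[OF h0 h1, of x] g h0 by (intro powr_mono2') auto
    also have "\<dots> = (h / 2) powr (- \<gamma>) * (1 + \<bar>real_of_int \<lfloor>x / h\<rfloor>\<bar>) powr (- \<gamma>)"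
      using h0 by (subst powr_mult) auto
    finally show ?thesis .
  qed
  show ?thesis
  proof (intro exI allI impI)
    fix F :: "(int \<times> int) set" assume F: "finite F"
    have "(\<Sum>k\<in>F. (1 + \<bar>wdot w k\<bar>) powr (- \<alpha>) * (1 + \<bar>wpdot w k\<bar>) powr (- \<beta>)) \<le> (\<Sum>k\<in>F. D * g (\<phi> k))"
    proof (rule sum_mono)
      fix k
      have "(1 + \<bar>wdot w k\<bar>) powr (- \<alpha>) * (1 + \<bar>wpdot w k\<bar>) powr (- \<beta>)
        \<le> ((h / 2) powr (- \<alpha>) * (1 + \<bar>real_of_int \<lfloor>wdot w k / h\<rfloor>\<bar>) powr (- \<alpha>))
          * ((h / 2) powr (- \<beta>) * (1 + \<bar>real_of_int \<lfloor>wpdot w k / h\<rfloor>\<bar>) powr (- \<beta>))"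
        using pw[of \<alpha> "wdot w k"] pw[of \<beta> "wpdot w k"] a b by (intro mult_mono) auto
      also have "\<dots> = D * g (\<phi> k)" by (simp add: D_def g_def \<phi>_def mult_ac)
      finally show "(1 + \<bar>wdot w k\<bar>) powr (- \<alpha>) * (1 + \<bar>wpdot w k\<bar>) powr (- \<beta>) \<le> D * g (\<phi> k)" .
    qed
    also have "\<dots> = D * (\<Sum>p\<in>\<phi> ` F. g p)"
      using inj by (simp add: sum.reindex inj_on_subset sum_distrib_left)
    also have "\<dots> \<le> D * (\<Sum>p\<in>(fst ` \<phi> ` F) \<times> (snd ` \<phi> ` F). g p)"
    proof (intro mult_left_mono[OF _ D0] sum_mono2)
      show "finite ((fst ` \<phi> ` F) \<times> (snd ` \<phi> ` F))" using F by simp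
      show "\<phi> ` F \<subseteq> (fst ` \<phi> ` F) \<times> (snd ` \<phi> ` F)" by (simp add: subset_iff mem_Times_iff)
    qed (simp add: g_def)
    also have "(\<Sum>p\<in>(fst ` \<phi> ` F) \<times> (snd ` \<phi> ` F). g p)
        = (\<Sum>m\<in>fst ` \<phi> ` F. (1 + \<bar>real_of_int m\<bar>) powr (- \<alpha>)) * (\<Sum>l\<in>snd ` \<phi> ` F. (1 + \<bar>real_of_int l\<bar>) powr (- \<beta>))"
      by (simp add: g_def sum_product sum.cartesian_product split_def)
    also have "\<dots> \<le> Za * Zb"
      using F by (intro mult_mono Za Zb sum_nonneg Za0) auto
    finally show "(\<Sum>k\<in>F. (1 + \<bar>wdot w k\<bar>) powr (- \<alpha>) * (1 + \<bar>wpdot w k\<bar>) powr (- \<beta>)) \<le> D * (Za * Zb)"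
      using D0 by (simp add: mult_left_mono)
  qed
qed

lemma ptwise_gen:
  fixes x X Y p q \<theta> a1 a2 :: real
  assumes X: "X \<ge> p / 2" and Y: "Y \<ge> q / 2" and p: "p \<ge> 1" and q: "q \<ge> 1"
    and th: "0 < \<theta>" "\<theta> < 1" and a1: "a1 > 0" and a2: "a2 > 0" and x: "x\<^sup>2 \<le> p\<^sup>2"
  shows "x\<^sup>2 / (X powr a1 + Y powr a2)
         \<le> (2 powr (a1 * \<theta>) * 2 powr (a2 * (1 - \<theta>))) * (p powr (2 - a1 * \<theta>) * q powr (- (a2 * (1 - \<theta>))))"
proof -
  have X0: "X > 0" and Y0: "Y > 0" using X Y p q by auto
  define W where "W = X powr a1 + Y powr a2"
  define M where "M = max (X powr a1) (Y powr a2)"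
  have MW: "M \<le> W" using X0 Y0 by (simp add: M_def W_def)
  have M0: "M > 0" using X0 Y0 by (simp add: M_def max_def)
  have "(X powr a1) powr \<theta> * (Y powr a2) powr (1 - \<theta>) \<le> M powr \<theta> * M powr (1 - \<theta>)"
    using th by (intro mult_mono powr_mono2) (auto simp: M_def)
  also have "\<dots> = M" using M0 by (simp add: powr_add[symmetric])
  finally have 1: "X powr (a1 * \<theta>) * Y powr (a2 * (1 - \<theta>)) \<le> W"
    using MW by (simp add: powr_powr)
  define L where "L = (p / 2) powr (a1 * \<theta>) * (q / 2) powr (a2 * (1 - \<theta>))"
  have L0: "L > 0" using p q by (simp add: L_def)
  have "L \<le> X powr (a1 * \<theta>) * Y powr (a2 * (1 - \<theta>))"
    unfolding L_def using X Y p q th a1 a2 by (intro mult_mono powr_mono2) auto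
  with 1 have LW: "L \<le> W" by simp
  have "x\<^sup>2 / W \<le> p\<^sup>2 / L"
    using x LW L0 by (intro frac_le) auto
  also have "p\<^sup>2 / L = (2 powr (a1 * \<theta>) * 2 powr (a2 * (1 - \<theta>))) * (p powr (2 - a1 * \<theta>) * q powr (- (a2 * (1 - \<theta>))))"
  proof -
    have pp: "p\<^sup>2 = p powr 2" using p by (simp add: powr_realpow)
    show ?thesis
      unfolding L_def pp using p q
      by (simp add: powr_divide powr_diff powr_minus field_simps)
  qed
  finally show ?thesis by (simp add: W_def)
qed

lemma xi_l1_bound:
  fixes w :: "real \<times> real" and s1 s2 :: real
  assumes incomm: "incommensurable w" and s2: "1/2 < s2" "s2 \<le> 1" and s1: "s1 > 3 * s2 / (2 * s2 - 1)"
  shows "\<exists>C0\<ge>0. \<forall>F (v :: int \<times> int \<Rightarrow> complex). finite F \<longrightarrow>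
     (\<Sum>k\<in>F. \<bar>wdot w k\<bar> * cmod (v k))
       \<le> C0 * sqrt (\<Sum>k\<in>F. (jbr (wdot w k) powr (2 * s1) + jbr (wpdot w k) powr (2 * s2)) * (cmod (v k))\<^sup>2)"
proof -
  have d: "2 * s2 - 1 > 0" using s2 by simp
  have "3 * s2 / (2 * s2 - 1) > 0" using s2 d by simp
  then have s1p: "s1 > 0" using s1 by linarith
  have k1: "s1 * (2 * s2 - 1) > 3 * s2" using s1 d by (simp add: pos_divide_less_eq)
  have key: "3 / (2 * s1) < (2 * s2 - 1) / (2 * s2)"
    using k1 s1p s2 by (simp add: field_simps)
  define \<theta> where "\<theta> = (3 / (2 * s1) + (2 * s2 - 1) / (2 * s2)) / 2"
  have mid: "\<And>a b::real. a < b \<Longrightarrow> a < (a + b) / 2 \<and> (a + b) / 2 < b" by simp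
  have th1: "3 / (2 * s1) < \<theta>" and th2: "\<theta> < (2 * s2 - 1) / (2 * s2)"
    using mid[OF key] unfolding \<theta>_def by blast+
  have th0: "0 < \<theta>" using th1 s1p by (smt (verit) divide_pos_pos)
  have "(2 * s2 - 1) / (2 * s2) < 1" using s2 by (simp add: field_simps)
  then have thl: "\<theta> < 1" using th2 by linarith
  define \<alpha> where "\<alpha> = 2 * s1 * \<theta> - 2"
  define \<beta> where "\<beta> = 2 * s2 * (1 - \<theta>)"
  have "2 * s1 * \<theta> > 2 * s1 * (3 / (2 * s1))" using th1 s1p by (intro mult_strict_left_mono) auto
  then have a1: "\<alpha> > 1" using s1p by (simp add: \<alpha>_def)
  have "2 * s2 * (1 - \<theta>) > 2 * s2 * (1 - (2 * s2 - 1) / (2 * s2))" using th2 s2 by (intro mult_strict_left_mono) auto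
  then have b1: "\<beta> > 1" using s2 by (simp add: \<beta>_def field_simps)
  obtain C where C: "\<And>F. finite F \<Longrightarrow>
     (\<Sum>k\<in>F. (1 + \<bar>wdot w k\<bar>) powr (- \<alpha>) * (1 + \<bar>wpdot w k\<bar>) powr (- \<beta>)) \<le> C"
    using lattice_sum_bound[OF incomm_nonzero[OF incomm] a1 b1] by blast
  have C0: "C \<ge> 0" using C[of "{}"] by simp
  define D where "D = 2 powr (2 * s1 * \<theta>) * 2 powr (2 * s2 * (1 - \<theta>))"
  have D0: "D \<ge> 0" by (simp add: D_def)
  define W where "W k = jbr (wdot w k) powr (2 * s1) + jbr (wpdot w k) powr (2 * s2)" for k
  have W0: "\<And>k. W k > 0"
  proof -
    fix k
    have "jbr (wdot w k) powr (2 * s1) > 0" "jbr (wpdot w k) powr (2 * s2) > 0" using jbr_pos[of "wdot w k"] jbr_pos[of "wpdot w k"] by simp_all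
    then show "W k > 0" unfolding W_def by (rule add_pos_pos)
  qed
  have pt: "(wdot w k)\<^sup>2 / W k \<le> D * ((1 + \<bar>wdot w k\<bar>) powr (- \<alpha>) * (1 + \<bar>wpdot w k\<bar>) powr (- \<beta>))" for k
  proof -
    have "1 + \<bar>wdot w k\<bar> \<le> 2 * jbr (wdot w k)" using jbr_ge1[of "wdot w k"] abs_le_jbr[of "wdot w k"] by linarith
    then have j1: "jbr (wdot w k) \<ge> (1 + \<bar>wdot w k\<bar>) / 2" by simp
    have "1 + \<bar>wpdot w k\<bar> \<le> 2 * jbr (wpdot w k)" using jbr_ge1[of "wpdot w k"] abs_le_jbr[of "wpdot w k"] by linarith
    then have j2: "jbr (wpdot w k) \<ge> (1 + \<bar>wpdot w k\<bar>) / 2" by simp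
    have xx: "(wdot w k)\<^sup>2 \<le> (1 + \<bar>wdot w k\<bar>)\<^sup>2"
      by (metis abs_ge_zero add_increasing2 le_add_same_cancel2 power2_abs power_mono zero_le_one)
    have "(wdot w k)\<^sup>2 / W k \<le> (2 powr (2 * s1 * \<theta>) * 2 powr (2 * s2 * (1 - \<theta>))) *
        ((1 + \<bar>wdot w k\<bar>) powr (2 - 2 * s1 * \<theta>) * (1 + \<bar>wpdot w k\<bar>) powr (- (2 * s2 * (1 - \<theta>))))"
      unfolding W_def using s1p s2 th0 thl by (intro ptwise_gen j1 j2 xx) auto
    then show ?thesis by (simp add: D_def \<alpha>_def \<beta>_def)
  qed
  show ?thesis
  proof (intro exI[of _ "sqrt (D * C)"] conjI allI impI)
    show "sqrt (D * C) \<ge> 0" using D0 C0 by simp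
    fix F :: "(int \<times> int) set" and v :: "int \<times> int \<Rightarrow> complex" assume F: "finite F"
    have S1: "(\<Sum>k\<in>F. (wdot w k)\<^sup>2 / W k) \<le> D * C"
    proof -
      have "(\<Sum>k\<in>F. (wdot w k)\<^sup>2 / W k) \<le> (\<Sum>k\<in>F. D * ((1 + \<bar>wdot w k\<bar>) powr (- \<alpha>) * (1 + \<bar>wpdot w k\<bar>) powr (- \<beta>)))"
        by (rule sum_mono) (rule pt)
      also have "\<dots> \<le> D * C" using C[OF F] D0 by (simp add: sum_distrib_left[symmetric] mult_left_mono)
      finally show ?thesis .
    qed
    have "(\<Sum>k\<in>F. \<bar>wdot w k\<bar> * cmod (v k)) = (\<Sum>k\<in>F. \<bar>wdot w k / sqrt (W k)\<bar> * \<bar>sqrt (W k) * cmod (v k)\<bar>)"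
    proof (rule sum.cong[OF refl])
      fix k
      have "sqrt (W k) > 0" using W0[of k] by simp
      then show "\<bar>wdot w k\<bar> * cmod (v k) = \<bar>wdot w k / sqrt (W k)\<bar> * \<bar>sqrt (W k) * cmod (v k)\<bar>"
        by (simp add: abs_mult abs_divide)
    qed
    also have "\<dots> \<le> L2_set (\<lambda>k. wdot w k / sqrt (W k)) F * L2_set (\<lambda>k. sqrt (W k) * cmod (v k)) F"
      by (rule L2_set_mult_ineq)
    also have "L2_set (\<lambda>k. wdot w k / sqrt (W k)) F = sqrt (\<Sum>k\<in>F. (wdot w k)\<^sup>2 / W k)"
      unfolding L2_set_def using W0 by (simp add: power_divide less_imp_le)
    also have "L2_set (\<lambda>k. sqrt (W k) * cmod (v k)) F = sqrt (\<Sum>k\<in>F. W k * (cmod (v k))\<^sup>2)"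
      unfolding L2_set_def using W0 by (simp add: power_mult_distrib less_imp_le)
    also have "sqrt (\<Sum>k\<in>F. (wdot w k)\<^sup>2 / W k) * sqrt (\<Sum>k\<in>F. W k * (cmod (v k))\<^sup>2)
        \<le> sqrt (D * C) * sqrt (\<Sum>k\<in>F. W k * (cmod (v k))\<^sup>2)"
    proof (rule mult_right_mono)
      show "sqrt (\<Sum>k\<in>F. (wdot w k)\<^sup>2 / W k) \<le> sqrt (D * C)" using S1 by simp
      have "0 \<le> (\<Sum>k\<in>F. W k * (cmod (v k))\<^sup>2)" using W0 by (intro sum_nonneg mult_nonneg_nonneg) (auto intro: less_imp_le)
      then show "0 \<le> sqrt (\<Sum>k\<in>F. W k * (cmod (v k))\<^sup>2)" by simp
    qed
    finally show "(\<Sum>k\<in>F. \<bar>wdot w k\<bar> * cmod (v k))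
       \<le> sqrt (D * C) * sqrt (\<Sum>k\<in>F. (jbr (wdot w k) powr (2 * s1) + jbr (wpdot w k) powr (2 * s2)) * (cmod (v k))\<^sup>2)"
      by (simp add: W_def)
  qed
qed

lemma comp_core:
  fixes Q Q' :: "real \<Rightarrow> real"
  assumes T: "0 \<le> T" and eps: "\<epsilon> > 0" and C: "Cst > 0"
    and d: "\<And>t. t \<in> {0..T} \<Longrightarrow> (Q has_real_derivative Q' t) (at t within {0..})"
    and le: "\<And>t. t \<in> {0..T} \<Longrightarrow> Q' t \<le> Cst * Q t * sqrt (Q t)"
    and nn: "\<And>t. t \<in> {0..T} \<Longrightarrow> 0 \<le> Q t"
  shows "1 / sqrt (Q 0 + \<epsilon>) - Cst * T / 2 \<le> 1 / sqrt (Q T + \<epsilon>)"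
proof -
  define p where "p t = 1 / sqrt (Q t + \<epsilon>) + Cst * t / 2" for t
  have "p 0 \<le> p T"
  proof (rule deriv_nonneg_mono[OF T])
    fix t assume t: "t \<in> {0..T}"
    have pos: "Q t + \<epsilon> > 0" using nn[OF t] eps by linarith
    have d1: "((\<lambda>x. Q x + \<epsilon>) has_real_derivative Q' t) (at t within {0..})"
      using DERIV_add[OF d[OF t] DERIV_const[of \<epsilon>]] by simp
    have d2: "((\<lambda>x. sqrt (Q x + \<epsilon>)) has_real_derivative (inverse (sqrt (Q t + \<epsilon>)) / 2 * Q' t)) (at t within {0..})"
      by (rule DERIV_chain2[OF DERIV_real_sqrt[OF pos] d1])
    have sp: "sqrt (Q t + \<epsilon>) \<noteq> 0" using pos by simp
    have d3: "((\<lambda>x. 1 / sqrt (Q x + \<epsilon>)) has_real_derivative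
        ((0 * sqrt (Q t + \<epsilon>) - 1 * (inverse (sqrt (Q t + \<epsilon>)) / 2 * Q' t)) / (sqrt (Q t + \<epsilon>) * sqrt (Q t + \<epsilon>)))) (at t within {0..})"
      by (rule DERIV_divide[OF DERIV_const d2 sp])
    have d4: "((\<lambda>x. Cst * x / 2) has_real_derivative Cst / 2) (at t within {0..})"
      using DERIV_cmult[OF DERIV_ident, of "Cst / 2"] by (simp add: mult_ac)
    have eq: "(0 * sqrt (Q t + \<epsilon>) - 1 * (inverse (sqrt (Q t + \<epsilon>)) / 2 * Q' t)) / (sqrt (Q t + \<epsilon>) * sqrt (Q t + \<epsilon>)) + Cst / 2
        = - Q' t / (2 * sqrt (Q t + \<epsilon>) * (Q t + \<epsilon>)) + Cst / 2"
      using pos by (simp add: field_simps)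
    show "(p has_real_derivative (- Q' t / (2 * sqrt (Q t + \<epsilon>) * (Q t + \<epsilon>)) + Cst / 2)) (at t within {0..})"
      unfolding p_def using DERIV_add[OF d3 d4] eq by simp
    have "Q' t \<le> Cst * (Q t + \<epsilon>) * sqrt (Q t + \<epsilon>)"
    proof -
      have "Cst * Q t * sqrt (Q t) \<le> Cst * (Q t + \<epsilon>) * sqrt (Q t + \<epsilon>)"
        using C nn[OF t] eps by (intro mult_mono mult_left_mono) auto
      then show ?thesis using le[OF t] by linarith
    qed
    moreover have D: "2 * sqrt (Q t + \<epsilon>) * (Q t + \<epsilon>) > 0" using pos by simp
    ultimately have "Q' t / (2 * sqrt (Q t + \<epsilon>) * (Q t + \<epsilon>)) \<le> Cst / 2"
      by (subst pos_divide_le_eq[OF D]) (simp add: mult_ac)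
    then show "- Q' t / (2 * sqrt (Q t + \<epsilon>) * (Q t + \<epsilon>)) + Cst / 2 \<ge> 0" by simp
  qed
  then show ?thesis by (simp add: p_def)
qed

lemma one_over_sqrt_ge:
  fixes x c :: real
  assumes x: "x \<ge> 0" and c: "c > 0" and h: "c \<le> 1 / sqrt (x + e)" and e: "e > 0"
  shows "x + e \<le> 1 / c\<^sup>2"
proof -
  have s: "sqrt (x + e) > 0" using x e by simp
  from h s c have "c * sqrt (x + e) \<le> 1" by (simp add: field_simps)
  then have "sqrt (x + e) \<le> 1 / c" using c by (simp add: field_simps)
  then have "(sqrt (x + e))\<^sup>2 \<le> (1 / c)\<^sup>2" using s by (intro power_mono) auto
  then show ?thesis using x e by (simp add: power_divide)
qed

lemma comparison:
  fixes Q Q' :: "real \<Rightarrow> real"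
  assumes T: "0 \<le> T" and C: "Cst > 0"
    and d: "\<And>t. t \<in> {0..T} \<Longrightarrow> (Q has_real_derivative Q' t) (at t within {0..})"
    and le: "\<And>t. t \<in> {0..T} \<Longrightarrow> Q' t \<le> Cst * Q t * sqrt (Q t)"
    and nn: "\<And>t. t \<in> {0..T} \<Longrightarrow> 0 \<le> Q t"
    and Q00: "Q 0 \<le> Q0" and N0: "sqrt Q0 \<le> N0" and TT: "T \<le> 1 / (8 * Cst * (N0 + 1))"
  shows "Q T \<le> 2 * Q0"
proof -
  have q0: "0 \<le> Q 0" using nn[of 0] T by simp
  then have Q0nn: "Q0 \<ge> 0" using Q00 by linarith
  have N0nn: "N0 \<ge> 0" using N0 Q0nn by (meson order_trans real_sqrt_ge_zero)
  have "Cst * T \<le> Cst * (1 / (8 * Cst * (N0 + 1)))" using TT C by (intro mult_left_mono) auto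
  also have "\<dots> = 1 / (8 * (N0 + 1))" using C by simp
  finally have CT0: "Cst * T \<le> 1 / (8 * (N0 + 1))" .
  have "1 / (8 * (N0 + 1)) / 2 = 1 / (16 * (N0 + 1))" by simp
  with CT0 have CT: "Cst * T / 2 \<le> 1 / (16 * (N0 + 1))" by (metis divide_right_mono zero_le_numeral)
  show ?thesis
  proof (cases "Q0 > 0")
    case True
    define a where "a = sqrt Q0"
    have a0: "a > 0" using True by (simp add: a_def)
    have cc: "1 / sqrt (Q 0 + Q0) - Cst * T / 2 \<le> 1 / sqrt (Q T + Q0)"
      by (rule comp_core[OF T True C d le nn])
    have "(3 / 2 * a)\<^sup>2 = 9 / 4 * Q0" using True by (simp add: a_def power_mult_distrib power_divide)
    then have "Q 0 + Q0 \<le> (3 / 2 * a)\<^sup>2" using Q00 True by simp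
    then have "sqrt (Q 0 + Q0) \<le> 3 / 2 * a" using a0 by (intro real_le_lsqrt) auto
    moreover have "sqrt (Q 0 + Q0) > 0" using q0 True by simp
    ultimately have i1: "2 / (3 * a) \<le> 1 / sqrt (Q 0 + Q0)" using a0 by (simp add: field_simps)
    have "a \<le> N0 + 1" using N0 by (simp add: a_def)
    then have "1 / (16 * (N0 + 1)) \<le> 1 / (16 * a)" using a0 by (intro divide_left_mono) auto
    with CT have i2: "Cst * T / 2 \<le> 1 / (16 * a)" by linarith
    have "2 / (3 * a) - 1 / (16 * a) = 29 / (48 * a)" using a0 by (simp add: field_simps)
    with cc i1 i2 have "29 / (48 * a) \<le> 1 / sqrt (Q T + Q0)" by linarith
    then have "Q T + Q0 \<le> 1 / (29 / (48 * a))\<^sup>2"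
      using nn[of T] T True a0 by (intro one_over_sqrt_ge) auto
    also have "\<dots> = (2304 / 841) * a\<^sup>2" using a0 by (simp add: field_simps power2_eq_square)
    also have "\<dots> = (2304 / 841) * Q0" using True by (simp add: a_def)
    finally show ?thesis using True by linarith
  next
    case False
    then have Q0z: "Q0 = 0" using Q0nn by linarith
    then have Qz: "Q 0 = 0" using q0 Q00 by linarith
    have small: "Q t \<le> 1" if t: "t \<in> {0..T}" for t
    proof -
      have t0: "0 \<le> t" using t by simp
      have cc: "1 / sqrt (Q 0 + 1) - Cst * t / 2 \<le> 1 / sqrt (Q t + 1)"
        by (rule comp_core[where Q=Q and Q'=Q' and T=t and \<epsilon>=1 and Cst=Cst]) (use t C d le nn in auto)
      have "Cst * t \<le> Cst * T" using t C by (intro mult_left_mono) auto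
      moreover have "1 / (16 * (N0 + 1)) \<le> 1 / 16" using N0nn by (simp add: field_simps)
      ultimately have "Cst * t / 2 \<le> 1 / 16" using CT by linarith
      with cc Qz have "15 / 16 \<le> 1 / sqrt (Q t + 1)" by simp
      then have "Q t + 1 \<le> 1 / (15 / 16)\<^sup>2" using nn[OF t] by (intro one_over_sqrt_ge) auto
      then show ?thesis by (simp add: power2_eq_square)
    qed
    have "Q T = 0"
    proof (rule gronwall0[OF T d])
      fix t assume t: "t \<in> {0..T}"
      have "sqrt (Q t) \<le> 1" using small[OF t] by simp
      then have "Cst * Q t * sqrt (Q t) \<le> Cst * Q t * 1" using C nn[OF t] by (intro mult_left_mono) auto
      then show "Q' t \<le> Cst * Q t" using le[OF t] by simp
    qed (use nn Qz in auto)
    then show ?thesis using Q0z by simp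
  qed
qed

lemma Pn_apply: "Pn w n f k = (if k \<in> Sset w (real n) then f k else 0)"
  by (simp add: Pn_def Pqr_def fmult_def Pqr_sym_def Sset_def)

lemma Pqr_apply: "Pqr w q r f k = (if \<bar>wdot w k\<bar> \<le> q \<and> \<bar>wpdot w k\<bar> \<le> r then f k else 0)"
  by (simp add: Pqr_def fmult_def Pqr_sym_def)

lemma conv_fin:
  assumes fin: "finite S" and V0: "\<And>k. k \<notin> S \<Longrightarrow> V k = 0"
  shows "conv V V k = (\<Sum>j\<in>S. V j * V (k - j))"
proof -
  have "conv V V k = infsum (\<lambda>j. V j * V (k - j)) UNIV"
    by (simp add: conv_def minus_pair_eq)
  also have "\<dots> = infsum (\<lambda>j. V j * V (k - j)) S"
    by (rule infsum_cong_neutral) (auto simp: V0)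
  also have "\<dots> = (\<Sum>j\<in>S. V j * V (k - j))" using fin by simp
  finally show ?thesis .
qed

definition Lc :: "real \<times> real \<Rightarrow> int \<times> int \<Rightarrow> complex" where
  "Lc w k = - (hilbert_sym w k * (dx_sym w k * dx_sym w k))"

lemma rhs_in:
  assumes fin: "finite (Sset w (real n))" and k: "k \<in> Sset w (real n)"
  shows "reg_rhs w n f k = Lc w k * f k + dx_sym w k * (\<Sum>j\<in>Sset w (real n). Pn w n f j * Pn w n f (k - j))"
proof -
  have "conv (Pn w n f) (Pn w n f) k = (\<Sum>j\<in>Sset w (real n). Pn w n f j * Pn w n f (k - j))"
    by (rule conv_fin[OF fin]) (simp add: Pn_apply)
  then show ?thesis using k
    by (simp add: reg_rhs_def Pn_apply Hilb_def Dx_def fmult_def Lc_def algebra_simps)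
qed

lemma rhs_out:
  assumes k: "k \<notin> Sset w (real n)"
  shows "reg_rhs w n f k = 0"
  using k by (simp add: reg_rhs_def Pn_apply)

lemma dx_sym_eq: "dx_sym w k = complex_of_real (2 * pi * wdot w k) * \<i>"
  by (simp add: dx_sym_def)

lemma Re_Lc: "Re (Lc w k) = 0"
  by (simp add: Lc_def hilbert_sym_def dx_sym_def)

lemma cnj_Lc: "cnj (Lc w (- k)) = Lc w k"
  by (auto simp: Lc_def hilbert_sym_def dx_sym_def wdot_uminus)

lemma cnj_dx: "cnj (dx_sym w (- k)) = dx_sym w k"
  by (simp add: dx_sym_def wdot_uminus)

lemma cmod_sq_deriv:
  fixes f :: "real \<Rightarrow> complex"
  assumes "(f has_vector_derivative f') (at t within s)"
  shows "((\<lambda>t. (cmod (f t))\<^sup>2) has_real_derivative 2 * Re (cnj (f t) * f')) (at t within s)"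
proof -
  have r: "((\<lambda>t. Re (f t)) has_real_derivative Re f') (at t within s)" using assms by (rule has_field_derivative_Re)
  have i: "((\<lambda>t. Im (f t)) has_real_derivative Im f') (at t within s)" using assms by (rule has_field_derivative_Im)
  note DERIV_add[OF DERIV_power[OF r, where n=2] DERIV_power[OF i, where n=2]]
  then show ?thesis by (simp add: cmod_power2 algebra_simps)
qed

lemma sum_reflect:
  assumes sym: "\<And>k. k \<in> S \<Longrightarrow> - k \<in> S"
  shows "(\<Sum>j\<in>S. g j) = (\<Sum>j\<in>S. g (- j :: int \<times> int))"
  by (rule sum.reindex_bij_witness[where i=uminus and j=uminus]) (auto simp: sym)

lemma real_defect_bound:
  fixes U :: coeffs
  assumes fin: "finite (Sset w (real n))" and M0: "M \<ge> 0"
    and hM: "\<And>j. j \<in> Sset w (real n) \<Longrightarrow> cmod (U j) \<le> M"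
  shows "(\<Sum>k\<in>Sset w (real n). 2 * Re (cnj (U k - cnj (U (- k))) * (reg_rhs w n U k - cnj (reg_rhs w n U (- k)))))
        \<le> (4 * M * card (Sset w (real n)) * (\<Sum>k\<in>Sset w (real n). cmod (dx_sym w k)))
            * (\<Sum>k\<in>Sset w (real n). (cmod (U k - cnj (U (- k))))\<^sup>2)"
proof -
  let ?S = "Sset w (real n)"
  define V where "V = Pn w n U"
  define Vt where "Vt m = cnj (V (- m))" for m
  define D where "D m = V m - Vt m" for m
  define f where "f = (\<Sum>k\<in>?S. (cmod (U k - cnj (U (- k))))\<^sup>2)"
  have sym: "\<And>k. k \<in> ?S \<Longrightarrow> - k \<in> ?S" by (rule Sset_uminus)
  have symn: "\<And>k. k \<notin> ?S \<Longrightarrow> - k \<notin> ?S" using sym by force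
  have VS: "\<And>k. k \<in> ?S \<Longrightarrow> V k = U k" and V0: "\<And>k. k \<notin> ?S \<Longrightarrow> V k = 0"
    by (simp_all add: V_def Pn_apply)
  have DS: "\<And>k. k \<in> ?S \<Longrightarrow> D k = U k - cnj (U (- k))"
    using sym by (simp add: D_def Vt_def VS)
  have D0: "\<And>k. k \<notin> ?S \<Longrightarrow> D k = 0"
    using symn by (simp add: D_def Vt_def V0)
  have f0: "f \<ge> 0" by (simp add: f_def sum_nonneg)
  have Df: "(cmod (D m))\<^sup>2 \<le> f" for m
  proof (cases "m \<in> ?S")
    case True
    have "(cmod (D m))\<^sup>2 = (cmod (U m - cnj (U (- m))))\<^sup>2" using DS[OF True] by simp
    also have "\<dots> \<le> f" unfolding f_def by (rule member_le_sum[OF True _ fin]) simp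
    finally show ?thesis .
  next
    case False then show ?thesis using f0 D0 by simp
  qed
  have DD: "cmod (D a) * cmod (D b) \<le> f" for a b
  proof -
    have "0 \<le> (cmod (D a) - cmod (D b))\<^sup>2" by simp
    then have "cmod (D a) * cmod (D b) \<le> ((cmod (D a))\<^sup>2 + (cmod (D b))\<^sup>2) / 2"
      by (simp add: power2_eq_square algebra_simps)
    also have "\<dots> \<le> f" using Df[of a] Df[of b] by simp
    finally show ?thesis .
  qed
  have VM: "cmod (V j) \<le> M" for j
    by (cases "j \<in> ?S") (simp_all add: VS hM V0 M0)
  have VtM: "cmod (Vt j) \<le> M" for j
    using VM[of "- j"] by (simp add: Vt_def)
  have key: "reg_rhs w n U k - cnj (reg_rhs w n U (- k))
      = Lc w k * D k + dx_sym w k * (\<Sum>j\<in>?S. V j * D (k - j) + D j * Vt (k - j))"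
    if k: "k \<in> ?S" for k
  proof -
    have r1: "reg_rhs w n U k = Lc w k * U k + dx_sym w k * (\<Sum>j\<in>?S. V j * V (k - j))"
      using rhs_in[OF fin k] by (simp add: V_def)
    have r2: "reg_rhs w n U (- k) = Lc w (- k) * U (- k) + dx_sym w (- k) * (\<Sum>j\<in>?S. V j * V (- k - j))"
      using rhs_in[OF fin sym[OF k]] by (simp add: V_def)
    have "(\<Sum>j\<in>?S. cnj (V j) * cnj (V (- k - j))) = (\<Sum>j\<in>?S. cnj (V (- j)) * cnj (V (- k - - j)))"
      by (rule sum_reflect[OF sym])
    also have "\<dots> = (\<Sum>j\<in>?S. Vt j * Vt (k - j))"
      by (simp add: Vt_def algebra_simps)
    finally have r3a: "(\<Sum>j\<in>?S. cnj (V j) * cnj (V (- k - j))) = (\<Sum>j\<in>?S. Vt j * Vt (k - j))" .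
    have r3: "cnj (reg_rhs w n U (- k)) = Lc w k * cnj (U (- k)) + dx_sym w k * (\<Sum>j\<in>?S. Vt j * Vt (k - j))"
    proof -
      have "cnj (\<Sum>j\<in>?S. V j * V (- k - j)) = (\<Sum>j\<in>?S. cnj (V j) * cnj (V (- k - j)))"
        by (simp add: cnj_sum)
      then show ?thesis using r2 r3a
        by (simp add: cnj_Lc cnj_dx)
    qed
    have "(\<Sum>j\<in>?S. V j * V (k - j)) - (\<Sum>j\<in>?S. Vt j * Vt (k - j)) = (\<Sum>j\<in>?S. V j * D (k - j) + D j * Vt (k - j))"
      by (simp add: D_def sum_subtractf[symmetric] algebra_simps)
    moreover have "reg_rhs w n U k - cnj (reg_rhs w n U (- k)) = Lc w k * (U k - cnj (U (- k)))
       + dx_sym w k * ((\<Sum>j\<in>?S. V j * V (k - j)) - (\<Sum>j\<in>?S. Vt j * Vt (k - j)))"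
      unfolding r1 r3 by (simp add: algebra_simps)
    ultimately show ?thesis using DS[OF k] by simp
  qed
  have pt: "2 * Re (cnj (U k - cnj (U (- k))) * (reg_rhs w n U k - cnj (reg_rhs w n U (- k))))
      \<le> 4 * M * card ?S * cmod (dx_sym w k) * f" if k: "k \<in> ?S" for k
  proof -
    define X where "X = (\<Sum>j\<in>?S. V j * D (k - j) + D j * Vt (k - j))"
    have "cnj (D k) * (Lc w k * D k + dx_sym w k * X) = Lc w k * complex_of_real ((cmod (D k))\<^sup>2) + cnj (D k) * dx_sym w k * X"
    proof -
      have "cnj (D k) * (Lc w k * D k + dx_sym w k * X) = Lc w k * (D k * cnj (D k)) + cnj (D k) * dx_sym w k * X"
        by (simp add: algebra_simps)
      then show ?thesis by (simp only: complex_norm_square[symmetric])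
    qed
    then have "Re (cnj (D k) * (Lc w k * D k + dx_sym w k * X)) = Re (cnj (D k) * dx_sym w k * X)"
      by (simp add: Re_Lc)
    also have "\<dots> \<le> cmod (D k) * cmod (dx_sym w k) * cmod X"
      using complex_Re_le_cmod[of "cnj (D k) * dx_sym w k * X"] by (simp add: norm_mult)
    also have "cmod X \<le> (\<Sum>j\<in>?S. M * cmod (D (k - j)) + cmod (D j) * M)"
      unfolding X_def
    proof (rule order_trans[OF norm_sum], rule sum_mono)
      fix j
      have "cmod (V j * D (k - j) + D j * Vt (k - j)) \<le> cmod (V j) * cmod (D (k - j)) + cmod (D j) * cmod (Vt (k - j))"
        using norm_triangle_ineq[of "V j * D (k - j)" "D j * Vt (k - j)"] by (simp add: norm_mult)
      also have "\<dots> \<le> M * cmod (D (k - j)) + cmod (D j) * M"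
        using VM[of j] VtM[of "k - j"] by (intro add_mono mult_right_mono mult_left_mono) auto
      finally show "cmod (V j * D (k - j) + D j * Vt (k - j)) \<le> M * cmod (D (k - j)) + cmod (D j) * M" .
    qed
    then have "cmod (D k) * cmod (dx_sym w k) * cmod X \<le> cmod (D k) * cmod (dx_sym w k) * (\<Sum>j\<in>?S. M * cmod (D (k - j)) + cmod (D j) * M)"
      by (intro mult_left_mono) auto
    also have "\<dots> = cmod (dx_sym w k) * M * (\<Sum>j\<in>?S. cmod (D k) * cmod (D (k - j)) + cmod (D k) * cmod (D j))"
      by (simp add: sum_distrib_left algebra_simps)
    also have "\<dots> \<le> cmod (dx_sym w k) * M * (\<Sum>j\<in>?S. f + f)"
      using M0 by (intro mult_left_mono sum_mono add_mono DD) auto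
    also have "\<dots> = 2 * M * card ?S * cmod (dx_sym w k) * f" by simp
    finally have "Re (cnj (D k) * (Lc w k * D k + dx_sym w k * X)) \<le> 2 * M * card ?S * cmod (dx_sym w k) * f" .
    then show ?thesis using key[OF k] DS[OF k] by (simp add: X_def)
  qed
  have "(\<Sum>k\<in>?S. 2 * Re (cnj (U k - cnj (U (- k))) * (reg_rhs w n U k - cnj (reg_rhs w n U (- k)))))
      \<le> (\<Sum>k\<in>?S. 4 * M * card ?S * cmod (dx_sym w k) * f)"
    by (rule sum_mono) (rule pt)
  also have "\<dots> = (4 * M * card ?S * (\<Sum>k\<in>?S. cmod (dx_sym w k))) * f"
    by (simp add: sum_distrib_left sum_distrib_right mult_ac)
  finally show ?thesis by (simp add: f_def)
qed

lemma realvalued_iff: "realvalued v \<longleftrightarrow> (\<forall>k. v (- k) = cnj (v k))"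
  by (simp add: realvalued_def uminus_pair_eq)

lemma sol_deriv:
  assumes "is_reg_solution w n v0 u" "t \<ge> 0"
  shows "((\<lambda>\<tau>. u \<tau> k) has_vector_derivative reg_rhs w n (u t) k) (at t within {0..})"
  using assms unfolding is_reg_solution_def by blast

lemma sol_cont:
  assumes sol: "is_reg_solution w n v0 u"
  shows "continuous_on {0..T} (\<lambda>t. u t k)"
proof (rule continuous_on_vector_derivative)
  fix t assume t: "t \<in> {0..T}"
  have "0 \<le> t" using t by simp
  show "((\<lambda>t. u t k) has_vector_derivative reg_rhs w n (u t) k) (at t within {0..T})"
    by (rule has_vector_derivative_within_subset[OF sol_deriv[OF sol \<open>0 \<le> t\<close>]]) auto
qed

lemma sol_bound:
  assumes sol: "is_reg_solution w n v0 u" and fin: "finite S"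
  shows "\<exists>M\<ge>0. \<forall>k\<in>S. \<forall>t\<in>{0..T}. cmod (u t k) \<le> M"
proof -
  have "bounded (\<Union>k\<in>S. (\<lambda>t. u t k) ` {0..T})"
  proof (rule bounded_UN[OF fin], rule ballI)
    fix k assume "k \<in> S"
    show "bounded ((\<lambda>t. u t k) ` {0..T})"
      by (rule compact_imp_bounded, rule compact_continuous_image[OF sol_cont[OF sol]]) simp
  qed
  then obtain M where M: "\<And>x. x \<in> (\<Union>k\<in>S. (\<lambda>t. u t k) ` {0..T}) \<Longrightarrow> norm x \<le> M"
    unfolding bounded_iff by blast
  show ?thesis
  proof (intro exI[of _ "max M 0"] conjI ballI)
    fix k t assume "k \<in> S" "t \<in> {0..T}"
    then have "u t k \<in> (\<Union>k\<in>S. (\<lambda>t. u t k) ` {0..T})" by blast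
    then have "norm (u t k) \<le> M" by (rule M)
    then show "cmod (u t k) \<le> max M 0" by simp
  qed simp
qed

lemma const_out:
  assumes sol: "is_reg_solution w n v0 u" and k: "k \<notin> Sset w (real n)" and t: "t \<ge> 0"
  shows "u t k = u 0 k"
proof -
  have "((\<lambda>\<tau>. u \<tau> k) has_vector_derivative 0) (at x within {0..})" if x: "x \<in> {0..}" for x
  proof -
    have "0 \<le> x" using x by simp
    from sol_deriv[OF sol this, of k] show ?thesis using rhs_out[OF k] by simp
  qed
  then obtain c where "\<And>x. x \<in> {0::real..} \<Longrightarrow> u x k = c"
    by (rule has_vector_derivative_zero_constant[of "{0..}", OF convex_real_interval(1)]) auto
  then show ?thesis using t by force
qed

lemma sol_real:
  assumes inc: "incommensurable w" and sol: "is_reg_solution w n v0 u" and v0r: "realvalued v0"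
    and T: "T \<ge> 0" and k: "k \<in> Sset w (real n)"
  shows "u T (- k) = cnj (u T k)"
proof -
  let ?S = "Sset w (real n)"
  have fin: "finite ?S" by (rule finite_Sset[OF inc])
  obtain M where M0: "M \<ge> 0" and M: "\<And>k t. k \<in> ?S \<Longrightarrow> t \<in> {0..T} \<Longrightarrow> cmod (u t k) \<le> M"
    using sol_bound[OF sol fin, of T] by blast
  define f where "f t = (\<Sum>k\<in>?S. (cmod (u t k - cnj (u t (- k))))\<^sup>2)" for t
  define f' where "f' t = (\<Sum>k\<in>?S. 2 * Re (cnj (u t k - cnj (u t (- k))) * (reg_rhs w n (u t) k - cnj (reg_rhs w n (u t) (- k)))))" for t
  define L where "L = 4 * M * card ?S * (\<Sum>k\<in>?S. cmod (dx_sym w k))"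
  have "f T = 0"
  proof (rule gronwall0[OF T, where f' = f' and L = L])
    fix t assume t: "t \<in> {0..T}"
    show "(f has_real_derivative f' t) (at t within {0..})"
      unfolding f_def f'_def
    proof (rule DERIV_sum)
      fix k
      have "((\<lambda>\<tau>. u \<tau> k - cnj (u \<tau> (- k))) has_vector_derivative (reg_rhs w n (u t) k - cnj (reg_rhs w n (u t) (- k)))) (at t within {0..})"
        using t by (intro has_vector_derivative_diff has_vector_derivative_cnj sol_deriv[OF sol]) auto
      then show "((\<lambda>x. (cmod (u x k - cnj (u x (- k))))\<^sup>2) has_real_derivative
          2 * Re (cnj (u t k - cnj (u t (- k))) * (reg_rhs w n (u t) k - cnj (reg_rhs w n (u t) (- k))))) (at t within {0..})"
        by (rule cmod_sq_deriv)
    qed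
    show "f' t \<le> L * f t"
      unfolding f'_def f_def L_def by (rule real_defect_bound[OF fin M0]) (use M t in auto)
    show "0 \<le> f t" by (simp add: f_def sum_nonneg)
  next
    have u0: "u 0 = v0" using sol by (simp add: is_reg_solution_def)
    have vr: "\<And>k. v0 (- k) = cnj (v0 k)" using v0r realvalued_iff by blast
    show "f 0 = 0" by (simp add: f_def u0 vr)
  qed
  then have "(cmod (u T (- k) - cnj (u T (- (- k)))))\<^sup>2 = 0"
    unfolding f_def using fin Sset_uminus[OF k] by (subst (asm) sum_nonneg_eq_0_iff) auto
  then have "u T (- k) = cnj (u T k)" by simp
  then show ?thesis .
qed

lemma powr_sq: "x > 0 \<Longrightarrow> (x powr s)\<^sup>2 = x powr (2 * s)"
  for x s :: real
  by (simp add: power2_eq_square powr_add[symmetric])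

lemma cancel_x:
  fixes V :: coeffs
  assumes fin: "finite S" and sym: "\<And>k. k \<in> S \<Longrightarrow> - k \<in> S"
    and V0: "\<And>k. k \<notin> S \<Longrightarrow> V k = 0" and Vr: "\<And>k. V (- k) = cnj (V k)"
    and s1: "s1 \<ge> 1"
  shows "\<bar>Im (\<Sum>(a,b)\<in>Tset S. complex_of_real (jbr (wdot w (a + b)) powr (2 * s1)) * cnj (V (a + b)) * complex_of_real (wdot w (a + b)) * V a * V b)\<bar>
     \<le> (4 * (s1 * 2 powr (s1 - 1)) + 1) * (\<Sum>a\<in>S. \<bar>wdot w a\<bar> * cmod (V a)) * (\<Sum>c\<in>S. jbr (wdot w c) powr (2 * s1) * (cmod (V c))\<^sup>2)"
proof -
  define lam where "lam k = jbr (wdot w k) powr s1" for k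
  have sq: "\<And>k. (lam k)\<^sup>2 = jbr (wdot w k) powr (2 * s1)" by (simp add: lam_def powr_sq jbr_pos)
  have "\<bar>Im (\<Sum>(a,b)\<in>Tset S. complex_of_real ((lam (a + b))\<^sup>2) * cnj (V (a + b)) * complex_of_real (wdot w (a + b)) * V a * V b)\<bar>
     \<le> (4 * (s1 * 2 powr (s1 - 1)) + 1) * (\<Sum>a\<in>S. \<bar>wdot w a\<bar> * cmod (V a)) * (\<Sum>c\<in>S. (lam c)\<^sup>2 * (cmod (V c))\<^sup>2)"
  proof (rule cancel_est[where S=S and v=V and lam=lam and xi="wdot w"])
    show "finite S" by (rule fin)
    show "\<And>k. k \<in> S \<Longrightarrow> - k \<in> S" by (rule sym)
    show "\<And>k. k \<notin> S \<Longrightarrow> V k = 0" by (rule V0)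
    show "\<And>k. V (- k) = cnj (V k)" by (rule Vr)
    show "\<And>k. lam (- k) = lam k" by (simp add: lam_def wdot_uminus jbr_uminus)
    show "\<And>k. lam k \<ge> 0" by (simp add: lam_def)
    show "\<And>a b. wdot w (a + b) = wdot w a + wdot w b" by (rule wdot_add)
    show "s1 * 2 powr (s1 - 1) \<ge> 0" using s1 by simp
    fix a b
    show "\<bar>lam (a + b) - lam b\<bar> * \<bar>wdot w b\<bar> \<le> s1 * 2 powr (s1 - 1) * (lam a * \<bar>wdot w b\<bar> + \<bar>wdot w a\<bar> * lam b)"
      using lam_x_cond[OF s1, of "wdot w a" "wdot w b"] by (simp add: lam_def wdot_add)
  qed
  then show ?thesis by (simp add: sq)
qed

lemma cancel_y:
  fixes V :: coeffs
  assumes fin: "finite S" and sym: "\<And>k. k \<in> S \<Longrightarrow> - k \<in> S"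
    and V0: "\<And>k. k \<notin> S \<Longrightarrow> V k = 0" and Vr: "\<And>k. V (- k) = cnj (V k)"
    and s2: "0 < s2" "s2 \<le> 1"
  shows "\<bar>Im (\<Sum>(a,b)\<in>Tset S. complex_of_real (jbr (wpdot w (a + b)) powr (2 * s2)) * cnj (V (a + b)) * complex_of_real (wdot w (a + b)) * V a * V b)\<bar>
     \<le> (4 * 1 + 1) * (\<Sum>a\<in>S. \<bar>wdot w a\<bar> * cmod (V a)) * (\<Sum>c\<in>S. jbr (wpdot w c) powr (2 * s2) * (cmod (V c))\<^sup>2)"
proof -
  define lam where "lam k = jbr (wpdot w k) powr s2" for k
  have sq: "\<And>k. (lam k)\<^sup>2 = jbr (wpdot w k) powr (2 * s2)" by (simp add: lam_def powr_sq jbr_pos)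
  have "\<bar>Im (\<Sum>(a,b)\<in>Tset S. complex_of_real ((lam (a + b))\<^sup>2) * cnj (V (a + b)) * complex_of_real (wdot w (a + b)) * V a * V b)\<bar>
     \<le> (4 * 1 + 1) * (\<Sum>a\<in>S. \<bar>wdot w a\<bar> * cmod (V a)) * (\<Sum>c\<in>S. (lam c)\<^sup>2 * (cmod (V c))\<^sup>2)"
  proof (rule cancel_est[where S=S and v=V and lam=lam and xi="wdot w"])
    show "finite S" by (rule fin)
    show "\<And>k. k \<in> S \<Longrightarrow> - k \<in> S" by (rule sym)
    show "\<And>k. k \<notin> S \<Longrightarrow> V k = 0" by (rule V0)
    show "\<And>k. V (- k) = cnj (V k)" by (rule Vr)
    show "\<And>k. lam (- k) = lam k" by (simp add: lam_def wpdot_uminus jbr_uminus)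
    show "\<And>k. lam k \<ge> 0" by (simp add: lam_def)
    show "\<And>a b. wdot w (a + b) = wdot w a + wdot w b" by (rule wdot_add)
    show "(1::real) \<ge> 0" by simp
    fix a b
    have "\<bar>lam (a + b) - lam b\<bar> \<le> lam a"
      using lam_y_cond[OF s2, of "wpdot w a" "wpdot w b"] by (simp add: lam_def wpdot_add)
    then have "\<bar>lam (a + b) - lam b\<bar> * \<bar>wdot w b\<bar> \<le> lam a * \<bar>wdot w b\<bar>" by (intro mult_right_mono) auto
    also have "\<dots> \<le> 1 * (lam a * \<bar>wdot w b\<bar> + \<bar>wdot w a\<bar> * lam b)" by (simp add: lam_def)
    finally show "\<bar>lam (a + b) - lam b\<bar> * \<bar>wdot w b\<bar> \<le> 1 * (lam a * \<bar>wdot w b\<bar> + \<bar>wdot w a\<bar> * lam b)" .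
  qed
  then show ?thesis by (simp add: sq)
qed

lemma energy_est:
  fixes u :: "real \<Rightarrow> coeffs"
  assumes inc: "incommensurable w" and s2: "1/2 < s2" "s2 \<le> 1" and s1: "s1 \<ge> 1"
    and C0: "C0 \<ge> 0"
    and hC0: "\<And>F (v::coeffs). finite F \<Longrightarrow> (\<Sum>k\<in>F. \<bar>wdot w k\<bar> * cmod (v k))
         \<le> C0 * sqrt (\<Sum>k\<in>F. (jbr (wdot w k) powr (2 * s1) + jbr (wpdot w k) powr (2 * s2)) * (cmod (v k))\<^sup>2)"
    and sol: "is_reg_solution w n v0 u" and v0r: "realvalued v0" and t: "t \<ge> 0"
  shows "(\<Sum>k\<in>Sset w (real n). (jbr (wdot w k) powr (2 * s1) + jbr (wpdot w k) powr (2 * s2)) * (2 * Re (cnj (u t k) * reg_rhs w n (u t) k)))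
    \<le> (4 * pi * (4 * (s1 * 2 powr (s1 - 1) + 1) + 1) * C0)
        * (\<Sum>k\<in>Sset w (real n). (jbr (wdot w k) powr (2 * s1) + jbr (wpdot w k) powr (2 * s2)) * (cmod (u t k))\<^sup>2)
        * sqrt (\<Sum>k\<in>Sset w (real n). (jbr (wdot w k) powr (2 * s1) + jbr (wpdot w k) powr (2 * s2)) * (cmod (u t k))\<^sup>2)"
proof -
  let ?S = "Sset w (real n)"
  have fin: "finite ?S" by (rule finite_Sset[OF inc])
  have sym: "\<And>k. k \<in> ?S \<Longrightarrow> - k \<in> ?S" by (rule Sset_uminus)
  have symn: "\<And>k. k \<notin> ?S \<Longrightarrow> - k \<notin> ?S" using sym by force
  define wx where "wx k = jbr (wdot w k) powr (2 * s1)" for k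
  define wy where "wy k = jbr (wpdot w k) powr (2 * s2)" for k
  define V where "V = Pn w n (u t)"
  have V0: "\<And>k. k \<notin> ?S \<Longrightarrow> V k = 0" and VS: "\<And>k. k \<in> ?S \<Longrightarrow> V k = u t k"
    by (simp_all add: V_def Pn_apply)
  have Vr: "V (- k) = cnj (V k)" for k
  proof (cases "k \<in> ?S")
    case True then show ?thesis using sol_real[OF inc sol v0r t True] sym[OF True] by (simp add: VS)
  next
    case False then show ?thesis using symn[OF False] by (simp add: V0)
  qed
  define c where "c k = (\<Sum>j\<in>?S. V j * V (k - j))" for k
  define z where "z k = cnj (V k) * complex_of_real (wdot w k) * c k" for k
  define Q where "Q = (\<Sum>k\<in>?S. (wx k + wy k) * (cmod (u t k))\<^sup>2)"
  define G where "G = (\<Sum>a\<in>?S. \<bar>wdot w a\<bar> * cmod (V a))"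
  define Ex where "Ex = (\<Sum>c\<in>?S. wx c * (cmod (V c))\<^sup>2)"
  define Ey where "Ey = (\<Sum>c\<in>?S. wy c * (cmod (V c))\<^sup>2)"
  have wx0: "\<And>k. wx k \<ge> 0" and wy0: "\<And>k. wy k \<ge> 0" by (simp_all add: wx_def wy_def)
  have G0: "G \<ge> 0" by (simp add: G_def sum_nonneg)
  have Ex0: "Ex \<ge> 0" by (simp add: Ex_def sum_nonneg wx0)
  have Ey0: "Ey \<ge> 0" by (simp add: Ey_def sum_nonneg wy0)
  have QE: "Q = Ex + Ey" by (simp add: Q_def Ex_def Ey_def VS sum.distrib[symmetric] algebra_simps)
  have GQ: "G \<le> C0 * sqrt Q"
  proof -
    have "G \<le> C0 * sqrt (\<Sum>k\<in>?S. (wx k + wy k) * (cmod (V k))\<^sup>2)"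
      unfolding G_def wx_def wy_def by (rule hC0[OF fin])
    also have "(\<Sum>k\<in>?S. (wx k + wy k) * (cmod (V k))\<^sup>2) = Q" by (simp add: Q_def VS)
    finally show ?thesis .
  qed
  have pt: "(wx k + wy k) * (2 * Re (cnj (u t k) * reg_rhs w n (u t) k))
      = - 4 * pi * Im (complex_of_real (wx k) * z k + complex_of_real (wy k) * z k)" if k: "k \<in> ?S" for k
  proof -
    have r: "reg_rhs w n (u t) k = Lc w k * V k + dx_sym w k * c k"
      using rhs_in[OF fin k] VS[OF k] by (simp add: c_def V_def)
    have "cnj (u t k) * reg_rhs w n (u t) k = Lc w k * (V k * cnj (V k)) + complex_of_real (2 * pi) * \<i> * z k"
      unfolding r z_def using VS[OF k] by (simp add: dx_sym_eq algebra_simps)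
    also have "\<dots> = Lc w k * complex_of_real ((cmod (V k))\<^sup>2) + complex_of_real (2 * pi) * \<i> * z k"
      by (simp only: complex_norm_square)
    finally have "Re (cnj (u t k) * reg_rhs w n (u t) k) = - 2 * pi * Im (z k)"
      by (simp add: Re_Lc)
    then show ?thesis by (simp add: algebra_simps)
  qed
  have conv_x: "(\<Sum>k\<in>?S. complex_of_real (wx k) * z k)
      = (\<Sum>(a,b)\<in>Tset ?S. complex_of_real (jbr (wdot w (a + b)) powr (2 * s1)) * cnj (V (a + b)) * complex_of_real (wdot w (a + b)) * V a * V b)"
    unfolding z_def c_def wx_def
    using conv_reindex[OF fin V0, where G="\<lambda>k. complex_of_real (jbr (wdot w k) powr (2 * s1)) * cnj (V k) * complex_of_real (wdot w k)"]
    by (simp add: mult_ac)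
  have conv_y: "(\<Sum>k\<in>?S. complex_of_real (wy k) * z k)
      = (\<Sum>(a,b)\<in>Tset ?S. complex_of_real (jbr (wpdot w (a + b)) powr (2 * s2)) * cnj (V (a + b)) * complex_of_real (wdot w (a + b)) * V a * V b)"
    unfolding z_def c_def wy_def
    using conv_reindex[OF fin V0, where G="\<lambda>k. complex_of_real (jbr (wpdot w k) powr (2 * s2)) * cnj (V k) * complex_of_real (wdot w k)"]
    by (simp add: mult_ac)
  have ix: "\<bar>Im (\<Sum>k\<in>?S. complex_of_real (wx k) * z k)\<bar> \<le> (4 * (s1 * 2 powr (s1 - 1)) + 1) * G * Ex"
    unfolding conv_x by (unfold G_def Ex_def wx_def) (rule cancel_x[where S="Sset w (real n)" and V=V and w=w, OF fin sym V0 Vr s1])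
  have s2pos: "0 < s2" using s2 by simp
  have iy: "\<bar>Im (\<Sum>k\<in>?S. complex_of_real (wy k) * z k)\<bar> \<le> (4 * 1 + 1) * G * Ey"
    unfolding conv_y by (unfold G_def Ey_def wy_def) (rule cancel_y[where S="Sset w (real n)" and V=V and w=w, OF fin sym V0 Vr s2pos s2(2)])
  define K where "K = s1 * 2 powr (s1 - 1) + 1"
  have K1: "K \<ge> 1" using s1 by (simp add: K_def)
  have "(\<Sum>k\<in>?S. (wx k + wy k) * (2 * Re (cnj (u t k) * reg_rhs w n (u t) k)))
      = - 4 * pi * (Im (\<Sum>k\<in>?S. complex_of_real (wx k) * z k) + Im (\<Sum>k\<in>?S. complex_of_real (wy k) * z k))"
  proof -
    have "(\<Sum>k\<in>?S. (wx k + wy k) * (2 * Re (cnj (u t k) * reg_rhs w n (u t) k)))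
        = (\<Sum>k\<in>?S. - 4 * pi * Im (complex_of_real (wx k) * z k + complex_of_real (wy k) * z k))"
      by (rule sum.cong[OF refl]) (rule pt)
    also have "\<dots> = - 4 * pi * Im (\<Sum>k\<in>?S. complex_of_real (wx k) * z k + complex_of_real (wy k) * z k)"
      by (simp only: sum_distrib_left[symmetric] Im_sum)
    also have "\<dots> = - 4 * pi * (Im (\<Sum>k\<in>?S. complex_of_real (wx k) * z k) + Im (\<Sum>k\<in>?S. complex_of_real (wy k) * z k))"
      by (simp only: sum.distrib plus_complex.sel)
    finally show ?thesis .
  qed
  also have "\<dots> \<le> 4 * pi * (\<bar>Im (\<Sum>k\<in>?S. complex_of_real (wx k) * z k)\<bar> + \<bar>Im (\<Sum>k\<in>?S. complex_of_real (wy k) * z k)\<bar>)"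
  proof -
    let ?A = "Im (\<Sum>k\<in>?S. complex_of_real (wx k) * z k)" and ?B = "Im (\<Sum>k\<in>?S. complex_of_real (wy k) * z k)"
    have "- (?A + ?B) \<le> \<bar>?A\<bar> + \<bar>?B\<bar>" using abs_ge_minus_self[of ?A] abs_ge_minus_self[of ?B] by linarith
    then have "4 * pi * (- (?A + ?B)) \<le> 4 * pi * (\<bar>?A\<bar> + \<bar>?B\<bar>)" by (rule mult_left_mono) simp
    then show ?thesis by (simp only: mult_minus_right mult_minus_left mult.assoc)
  qed
  also have "\<dots> \<le> 4 * pi * ((4 * K + 1) * G * Ex + (4 * K + 1) * G * Ey)"
  proof -
    have "(4 * (s1 * 2 powr (s1 - 1)) + 1) * G * Ex \<le> (4 * K + 1) * G * Ex"
      using G0 Ex0 by (intro mult_right_mono) (auto simp: K_def)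
    moreover have "(4 * 1 + 1) * G * Ey \<le> (4 * K + 1) * G * Ey"
      using G0 Ey0 K1 by (intro mult_right_mono) auto
    ultimately show ?thesis using ix iy by (intro mult_left_mono) auto
  qed
  also have "\<dots> = 4 * pi * (4 * K + 1) * G * Q" by (simp add: QE algebra_simps)
  also have "\<dots> \<le> 4 * pi * (4 * K + 1) * (C0 * sqrt Q) * Q"
    using GQ K1 QE Ex0 Ey0 by (intro mult_right_mono mult_left_mono) auto
  finally show ?thesis by (simp add: K_def wx_def wy_def Q_def mult_ac)
qed

lemma sum_le_infsum_nn:
  fixes f :: "'a \<Rightarrow> real"
  assumes s: "f summable_on UNIV" and nn: "\<And>x. f x \<ge> 0" and F: "finite F"
  shows "sum f F \<le> infsum f UNIV"
proof -
  have "infsum f F \<le> infsum f UNIV"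
    by (rule infsum_mono_neutral) (use s F nn in auto)
  then show ?thesis using F by simp
qed

lemma cmod_diff_sq_le: "(cmod (a - b))\<^sup>2 \<le> 2 * (cmod a)\<^sup>2 + 2 * (cmod b)\<^sup>2"
proof -
  have "cmod (a - b) \<le> cmod a + cmod b" by (rule norm_triangle_ineq4)
  then have "(cmod (a - b))\<^sup>2 \<le> (cmod a + cmod b)\<^sup>2" by (intro power_mono) auto
  also have "\<dots> \<le> 2 * (cmod a)\<^sup>2 + 2 * (cmod b)\<^sup>2"
    using sum_squares_ge_zero[of "cmod a - cmod b" 0] by (simp add: power2_eq_square algebra_simps)
  finally show ?thesis .
qed

lemma wsum_diff_summable:
  fixes ww :: "int \<times> int \<Rightarrow> real" and a l :: coeffs
  assumes ww0: "\<And>k. ww k \<ge> 0"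
    and sa: "(\<lambda>k. ww k * (cmod (a k))\<^sup>2) summable_on UNIV"
    and sl: "(\<lambda>k. ww k * (cmod (l k))\<^sup>2) summable_on UNIV"
  shows "(\<lambda>k. ww k * (cmod (a k - l k))\<^sup>2) summable_on UNIV"
proof (rule summable_on_comparison_test)
  show "(\<lambda>k. 2 * (ww k * (cmod (a k))\<^sup>2) + 2 * (ww k * (cmod (l k))\<^sup>2)) summable_on UNIV"
    by (intro summable_on_add summable_on_cmult_right sa sl)
  fix k
  show "ww k * (cmod (a k - l k))\<^sup>2 \<le> 2 * (ww k * (cmod (a k))\<^sup>2) + 2 * (ww k * (cmod (l k))\<^sup>2)"
    using mult_left_mono[OF cmod_diff_sq_le[of "a k" "l k"] ww0[of k]] by (simp add: algebra_simps)
  show "0 \<le> ww k * (cmod (a k - l k))\<^sup>2" using ww0[of k] by simp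
qed

lemma wnorm_triangle:
  fixes ww :: "int \<times> int \<Rightarrow> real" and a l :: coeffs
  assumes ww0: "\<And>k. ww k \<ge> 0"
    and sa: "(\<lambda>k. ww k * (cmod (a k))\<^sup>2) summable_on UNIV"
    and sl: "(\<lambda>k. ww k * (cmod (l k))\<^sup>2) summable_on UNIV"
  shows "sqrt (infsum (\<lambda>k. ww k * (cmod (a k))\<^sup>2) UNIV)
         \<le> sqrt (infsum (\<lambda>k. ww k * (cmod (a k - l k))\<^sup>2) UNIV) + sqrt (infsum (\<lambda>k. ww k * (cmod (l k))\<^sup>2) UNIV)"
proof -
  define A where "A = sqrt (infsum (\<lambda>k. ww k * (cmod (a k - l k))\<^sup>2) UNIV)"
  define B where "B = sqrt (infsum (\<lambda>k. ww k * (cmod (l k))\<^sup>2) UNIV)"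
  have sd: "(\<lambda>k. ww k * (cmod (a k - l k))\<^sup>2) summable_on UNIV" by (rule wsum_diff_summable[OF ww0 sa sl])
  have A0: "A \<ge> 0" and B0: "B \<ge> 0" unfolding A_def B_def using ww0 by (auto intro!: infsum_nonneg)
  have "infsum (\<lambda>k. ww k * (cmod (a k))\<^sup>2) UNIV \<le> (A + B)\<^sup>2"
  proof (rule infsum_le_finite_sums[OF sa])
    fix F :: "(int \<times> int) set" assume F: "finite F"
    have L2: "\<And>g. L2_set (\<lambda>k. sqrt (ww k) * cmod (g k)) F = sqrt (\<Sum>k\<in>F. ww k * (cmod (g k))\<^sup>2)"
      unfolding L2_set_def using ww0 by (simp add: power_mult_distrib)
    have "L2_set (\<lambda>k. sqrt (ww k) * cmod (a k)) F \<le> L2_set (\<lambda>k. sqrt (ww k) * cmod (a k - l k) + sqrt (ww k) * cmod (l k)) F"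
    proof (rule L2_set_mono)
      fix k
      have "cmod (a k) \<le> cmod (a k - l k) + cmod (l k)" using norm_triangle_ineq[of "a k - l k" "l k"] by simp
      then show "sqrt (ww k) * cmod (a k) \<le> sqrt (ww k) * cmod (a k - l k) + sqrt (ww k) * cmod (l k)"
        by (metis distrib_left mult_left_mono real_sqrt_ge_zero ww0)
      show "0 \<le> sqrt (ww k) * cmod (a k)" using ww0[of k] by simp
    qed
    also have "\<dots> \<le> L2_set (\<lambda>k. sqrt (ww k) * cmod (a k - l k)) F + L2_set (\<lambda>k. sqrt (ww k) * cmod (l k)) F"
      by (rule L2_set_triangle_ineq)
    also have "\<dots> \<le> A + B"
    proof (rule add_mono)
      show "L2_set (\<lambda>k. sqrt (ww k) * cmod (a k - l k)) F \<le> A"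
        unfolding L2 A_def using sum_le_infsum_nn[OF sd _ F] ww0 by simp
      show "L2_set (\<lambda>k. sqrt (ww k) * cmod (l k)) F \<le> B"
        unfolding L2 B_def using sum_le_infsum_nn[OF sl _ F] ww0 by simp
    qed
    finally have "sqrt (\<Sum>k\<in>F. ww k * (cmod (a k))\<^sup>2) \<le> A + B" by (simp add: L2)
    moreover have nnF: "0 \<le> (\<Sum>k\<in>F. ww k * (cmod (a k))\<^sup>2)" using ww0 by (intro sum_nonneg) auto
    ultimately have "(sqrt (\<Sum>k\<in>F. ww k * (cmod (a k))\<^sup>2))\<^sup>2 \<le> (A + B)\<^sup>2" by (intro power_mono) auto
    then show "(\<Sum>k\<in>F. ww k * (cmod (a k))\<^sup>2) \<le> (A + B)\<^sup>2"
      using nnF by simp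
  qed
  then have "sqrt (infsum (\<lambda>k. ww k * (cmod (a k))\<^sup>2) UNIV) \<le> A + B"
    using A0 B0 by (intro real_le_lsqrt) auto
  then show ?thesis by (simp add: A_def B_def)
qed

lemma Hnorm_triangle:
  assumes a: "a \<in> Hspace w s1 s2" and l: "l \<in> Hspace w s1 s2"
  shows "Hnorm w s1 s2 a \<le> Hnorm w s1 s2 (a - l) + Hnorm w s1 s2 l"
proof -
  have 1: "sqrt (infsum (\<lambda>k. jbr (wdot w k) powr (2 * s1) * (cmod (a k))\<^sup>2) UNIV)
         \<le> sqrt (infsum (\<lambda>k. jbr (wdot w k) powr (2 * s1) * (cmod (a k - l k))\<^sup>2) UNIV) + sqrt (infsum (\<lambda>k. jbr (wdot w k) powr (2 * s1) * (cmod (l k))\<^sup>2) UNIV)"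
    by (rule wnorm_triangle) (use a l in \<open>auto simp: Hspace_def\<close>)
  have 2: "sqrt (infsum (\<lambda>k. jbr (wpdot w k) powr (2 * s2) * (cmod (a k))\<^sup>2) UNIV)
         \<le> sqrt (infsum (\<lambda>k. jbr (wpdot w k) powr (2 * s2) * (cmod (a k - l k))\<^sup>2) UNIV) + sqrt (infsum (\<lambda>k. jbr (wpdot w k) powr (2 * s2) * (cmod (l k))\<^sup>2) UNIV)"
    by (rule wnorm_triangle) (use a l in \<open>auto simp: Hspace_def\<close>)
  show ?thesis using 1 2 by (simp add: Hnorm_def)
qed

lemma Hnorm_nonneg: "Hnorm w s1 s2 a \<ge> 0"
  unfolding Hnorm_def by (intro add_nonneg_nonneg real_sqrt_ge_zero infsum_nonneg) auto

lemma Hcompact_bounded: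
  assumes K: "Hcompact w s1 s2 K"
  shows "\<exists>B. \<forall>a\<in>K. Hnorm w s1 s2 a \<le> B"
proof (rule ccontr)
  assume "\<not> ?thesis"
  then have "\<forall>i::nat. \<exists>a\<in>K. Hnorm w s1 s2 a > real i" by (meson not_le)
  then obtain x where x: "\<And>i. x i \<in> K" "\<And>i. Hnorm w s1 s2 (x i) > real i" by metis
  obtain r l where r: "strict_mono r" and l: "l \<in> K" and lim: "(\<lambda>i. Hnorm w s1 s2 (x (r i) - l)) \<longlonglongrightarrow> 0"
    using K x(1) unfolding Hcompact_def by blast
  have KH: "K \<subseteq> Hspace w s1 s2" using K by (simp add: Hcompact_def)
  have "eventually (\<lambda>i. Hnorm w s1 s2 (x (r i) - l) < 1) sequentially"
    using order_tendstoD(2)[OF lim] by simp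
  then obtain N where N: "\<And>i. i \<ge> N \<Longrightarrow> Hnorm w s1 s2 (x (r i) - l) < 1"
    unfolding eventually_sequentially by blast
  define i where "i = max N (nat \<lceil>Hnorm w s1 s2 l\<rceil> + 1)"
  have "Hnorm w s1 s2 (x (r i)) \<le> Hnorm w s1 s2 (x (r i) - l) + Hnorm w s1 s2 l"
    using KH x(1) l by (intro Hnorm_triangle) auto
  also have "\<dots> < 1 + Hnorm w s1 s2 l" using N[of i] by (simp add: i_def)
  also have "\<dots> \<le> real i"
  proof -
    have "Hnorm w s1 s2 l \<le> real (nat \<lceil>Hnorm w s1 s2 l\<rceil>)" by linarith
    then show ?thesis unfolding i_def by linarith
  qed
  also have "real i \<le> real (r i)" using seq_suble[OF r, of i] by simp
  finally show False using x(2)[of "r i"] by linarith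
qed

lemma sqrt_sum_le: "0 \<le> a \<Longrightarrow> 0 \<le> b \<Longrightarrow> sqrt a + sqrt b \<le> sqrt (2 * (a + b))"
proof -
  assume a: "0 \<le> a" and b: "0 \<le> b"
  have "0 \<le> (sqrt a - sqrt b)\<^sup>2" by simp
  then have "(sqrt a + sqrt b)\<^sup>2 \<le> 2 * (a + b)"
    using a b by (simp add: power2_eq_square algebra_simps)
  then show ?thesis by (rule real_le_rsqrt)
qed

lemma main_bound:
  fixes u :: "real \<Rightarrow> coeffs" and u0 :: coeffs
  assumes inc: "incommensurable w" and s2: "1/2 < s2" "s2 \<le> 1" and s1: "s1 \<ge> 1"
    and C0: "C0 \<ge> 0"
    and hC0: "\<And>F (v::coeffs). finite F \<Longrightarrow> (\<Sum>k\<in>F. \<bar>wdot w k\<bar> * cmod (v k))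
         \<le> C0 * sqrt (\<Sum>k\<in>F. (jbr (wdot w k) powr (2 * s1) + jbr (wpdot w k) powr (2 * s2)) * (cmod (v k))\<^sup>2)"
    and u0H: "u0 \<in> Hspace w s1 s2" and u0r: "realvalued u0"
    and sol: "is_reg_solution w n (Pqr w q r u0) u"
    and Cst: "Cst = 4 * pi * (4 * (s1 * 2 powr (s1 - 1) + 1) + 1) * C0 + 1"
    and t: "0 \<le> t" "t \<le> 1 / (8 * Cst * (Hnorm w s1 s2 u0 + 1))"
  shows "Hnorm w s1 s2 (u t) \<le> 2 * Hnorm w s1 s2 u0"
proof -
  let ?S = "Sset w (real n)"
  have fin: "finite ?S" by (rule finite_Sset[OF inc])
  define v0 where "v0 = Pqr w q r u0"
  have u00: "u 0 = v0" using sol by (simp add: is_reg_solution_def v0_def)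
  have sol': "is_reg_solution w n v0 u" using sol by (simp add: v0_def)
  have v0r: "realvalued v0"
  proof -
    have h: "\<And>k. u0 (- k) = cnj (u0 k)" using u0r realvalued_iff by blast
    show ?thesis unfolding realvalued_iff
    proof
      fix k
      show "v0 (- k) = cnj (v0 k)" using h[of k] by (simp add: v0_def Pqr_apply wdot_uminus wpdot_uminus)
    qed
  qed
  have v0le: "cmod (v0 k) \<le> cmod (u0 k)" for k by (simp add: v0_def Pqr_apply)
  define wx where "wx k = jbr (wdot w k) powr (2 * s1)" for k
  define wy where "wy k = jbr (wpdot w k) powr (2 * s2)" for k
  have wx0: "\<And>k. wx k \<ge> 0" and wy0: "\<And>k. wy k \<ge> 0" by (simp_all add: wx_def wy_def)
  have sx0: "(\<lambda>k. wx k * (cmod (u0 k))\<^sup>2) summable_on UNIV" and sy0: "(\<lambda>k. wy k * (cmod (u0 k))\<^sup>2) summable_on UNIV"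
    using u0H by (simp_all add: Hspace_def wx_def wy_def)
  have vsum: "(\<lambda>k. ww k * (cmod (v0 k))\<^sup>2) summable_on UNIV"
    if ww0: "\<And>k. ww k \<ge> 0" and su: "(\<lambda>k. ww k * (cmod (u0 k))\<^sup>2) summable_on UNIV" for ww
  proof (rule summable_on_comparison_test[OF su])
    fix k
    have "(cmod (v0 k))\<^sup>2 \<le> (cmod (u0 k))\<^sup>2" using v0le[of k] by (intro power_mono) auto
    then show "ww k * (cmod (v0 k))\<^sup>2 \<le> ww k * (cmod (u0 k))\<^sup>2" using ww0[of k] by (intro mult_left_mono) auto
    show "0 \<le> ww k * (cmod (v0 k))\<^sup>2" using ww0[of k] by simp
  qed
  have sxv: "(\<lambda>k. wx k * (cmod (v0 k))\<^sup>2) summable_on UNIV" by (rule vsum[OF wx0 sx0])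
  have syv: "(\<lambda>k. wy k * (cmod (v0 k))\<^sup>2) summable_on UNIV" by (rule vsum[OF wy0 sy0])
  have decomp: "infsum (\<lambda>k. ww k * (cmod (u \<tau> k))\<^sup>2) UNIV
      = (\<Sum>k\<in>?S. ww k * (cmod (u \<tau> k))\<^sup>2) + infsum (\<lambda>k. ww k * (cmod (v0 k))\<^sup>2) (- ?S)"
    if sv: "(\<lambda>k. ww k * (cmod (v0 k))\<^sup>2) summable_on UNIV" and tau: "\<tau> \<ge> 0" for ww \<tau>
  proof -
    have eq: "\<And>k. k \<in> - ?S \<Longrightarrow> ww k * (cmod (u \<tau> k))\<^sup>2 = ww k * (cmod (v0 k))\<^sup>2"
      using const_out[OF sol' _ tau] u00 by simp
    have s1': "(\<lambda>k. ww k * (cmod (v0 k))\<^sup>2) summable_on (- ?S)" by (rule summable_on_subset[OF sv]) auto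
    have s2': "(\<lambda>k. ww k * (cmod (u \<tau> k))\<^sup>2) summable_on (- ?S)"
      by (subst summable_on_cong[OF eq]) (simp_all add: s1')
    have "infsum (\<lambda>k. ww k * (cmod (u \<tau> k))\<^sup>2) (?S \<union> - ?S)
        = infsum (\<lambda>k. ww k * (cmod (u \<tau> k))\<^sup>2) ?S + infsum (\<lambda>k. ww k * (cmod (u \<tau> k))\<^sup>2) (- ?S)"
      by (rule infsum_Un_disjoint) (use fin s2' in auto)
    moreover have "infsum (\<lambda>k. ww k * (cmod (u \<tau> k))\<^sup>2) (- ?S) = infsum (\<lambda>k. ww k * (cmod (v0 k))\<^sup>2) (- ?S)"
      by (rule infsum_cong) (rule eq)
    ultimately show ?thesis using fin by simp
  qed
  define R where "R = infsum (\<lambda>k. wx k * (cmod (v0 k))\<^sup>2) (- ?S) + infsum (\<lambda>k. wy k * (cmod (v0 k))\<^sup>2) (- ?S)"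
  have R0: "R \<ge> 0" unfolding R_def using wx0 wy0 by (intro add_nonneg_nonneg infsum_nonneg) auto
  define QS where "QS \<tau> = (\<Sum>k\<in>?S. (wx k + wy k) * (cmod (u \<tau> k))\<^sup>2)" for \<tau>
  define QS' where "QS' \<tau> = (\<Sum>k\<in>?S. (wx k + wy k) * (2 * Re (cnj (u \<tau> k) * reg_rhs w n (u \<tau>) k)))" for \<tau>
  define Q where "Q \<tau> = QS \<tau> + R" for \<tau>
  define Ex where "Ex \<tau> = infsum (\<lambda>k. wx k * (cmod (u \<tau> k))\<^sup>2) UNIV" for \<tau>
  define Ey where "Ey \<tau> = infsum (\<lambda>k. wy k * (cmod (u \<tau> k))\<^sup>2) UNIV" for \<tau>
  have QE: "Q \<tau> = Ex \<tau> + Ey \<tau>" if tau: "\<tau> \<ge> 0" for \<tau>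
    unfolding Q_def QS_def Ex_def Ey_def R_def decomp[OF sxv tau] decomp[OF syv tau]
    by (simp add: sum.distrib algebra_simps)
  have QS0: "QS \<tau> \<ge> 0" for \<tau> unfolding QS_def using wx0 wy0 by (intro sum_nonneg mult_nonneg_nonneg add_nonneg_nonneg) auto
  define Q0 where "Q0 = infsum (\<lambda>k. wx k * (cmod (u0 k))\<^sup>2) UNIV + infsum (\<lambda>k. wy k * (cmod (u0 k))\<^sup>2) UNIV"
  define N0 where "N0 = Hnorm w s1 s2 u0"
  have N0eq: "N0 = sqrt (infsum (\<lambda>k. wx k * (cmod (u0 k))\<^sup>2) UNIV) + sqrt (infsum (\<lambda>k. wy k * (cmod (u0 k))\<^sup>2) UNIV)"
    by (simp add: N0_def Hnorm_def wx_def wy_def)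
  have ex0: "infsum (\<lambda>k. wx k * (cmod (u0 k))\<^sup>2) UNIV \<ge> 0" and ey0: "infsum (\<lambda>k. wy k * (cmod (u0 k))\<^sup>2) UNIV \<ge> 0"
    using wx0 wy0 by (auto intro!: infsum_nonneg)
  have sQ0: "sqrt Q0 \<le> N0" unfolding Q0_def N0eq by (rule sqrt_add_le_add_sqrt[OF ex0 ey0])
  have Q00: "Q 0 \<le> Q0"
  proof -
    have "Q 0 = Ex 0 + Ey 0" by (rule QE) simp
    also have "Ex 0 \<le> infsum (\<lambda>k. wx k * (cmod (u0 k))\<^sup>2) UNIV"
      unfolding Ex_def u00
    proof (rule infsum_mono[OF sxv sx0])
      fix k
      have "(cmod (v0 k))\<^sup>2 \<le> (cmod (u0 k))\<^sup>2" using v0le[of k] by (intro power_mono) auto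
      then show "wx k * (cmod (v0 k))\<^sup>2 \<le> wx k * (cmod (u0 k))\<^sup>2" using wx0[of k] by (intro mult_left_mono) auto
    qed
    also have "Ey 0 \<le> infsum (\<lambda>k. wy k * (cmod (u0 k))\<^sup>2) UNIV"
      unfolding Ey_def u00
    proof (rule infsum_mono[OF syv sy0])
      fix k
      have "(cmod (v0 k))\<^sup>2 \<le> (cmod (u0 k))\<^sup>2" using v0le[of k] by (intro power_mono) auto
      then show "wy k * (cmod (v0 k))\<^sup>2 \<le> wy k * (cmod (u0 k))\<^sup>2" using wy0[of k] by (intro mult_left_mono) auto
    qed
    finally show ?thesis by (simp add: Q0_def)
  qed
  define Cst0 where "Cst0 = 4 * pi * (4 * (s1 * 2 powr (s1 - 1) + 1) + 1) * C0"
  have Cst00: "Cst0 \<ge> 0" using C0 s1 by (simp add: Cst0_def)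
  have CstC: "Cst = Cst0 + 1" by (simp add: Cst Cst0_def)
  have Cpos: "Cst > 0" using Cst00 CstC by simp
  have "Q t \<le> 2 * Q0"
  proof (rule comparison[OF t(1) Cpos, where Q' = QS'])
    fix \<tau> assume tau: "\<tau> \<in> {0..t}"
    then have tau0: "\<tau> \<ge> 0" by simp
    have "(QS has_real_derivative QS' \<tau>) (at \<tau> within {0..})"
      unfolding QS_def QS'_def
    proof (rule DERIV_sum)
      fix k
      show "((\<lambda>x. (wx k + wy k) * (cmod (u x k))\<^sup>2) has_real_derivative (wx k + wy k) * (2 * Re (cnj (u \<tau> k) * reg_rhs w n (u \<tau>) k))) (at \<tau> within {0..})"
        by (rule DERIV_cmult, rule cmod_sq_deriv, rule sol_deriv[OF sol' tau0])
    qed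
    then show "(Q has_real_derivative QS' \<tau>) (at \<tau> within {0..})"
      unfolding Q_def using DERIV_add[OF _ DERIV_const[of R]] by fastforce
    have "QS' \<tau> \<le> Cst0 * QS \<tau> * sqrt (QS \<tau>)"
      unfolding QS'_def QS_def Cst0_def wx_def wy_def
      by (rule energy_est[OF inc s2 s1 C0 hC0 sol' v0r tau0])
    also have "\<dots> \<le> Cst * Q \<tau> * sqrt (Q \<tau>)"
      using Cst00 CstC QS0[of \<tau>] R0 unfolding Q_def
      by (intro mult_mono real_sqrt_le_mono) auto
    finally show "QS' \<tau> \<le> Cst * Q \<tau> * sqrt (Q \<tau>)" .
    show "0 \<le> Q \<tau>" using QS0[of \<tau>] R0 by (simp add: Q_def)
  qed (use Q00 sQ0 t in \<open>simp_all add: N0_def\<close>)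
  have Ex0: "Ex t \<ge> 0" and Ey0: "Ey t \<ge> 0" unfolding Ex_def Ey_def using wx0 wy0 by (auto intro!: infsum_nonneg)
  have "Hnorm w s1 s2 (u t) = sqrt (Ex t) + sqrt (Ey t)" by (simp add: Hnorm_def Ex_def Ey_def wx_def wy_def)
  also have "\<dots> \<le> sqrt (2 * (Ex t + Ey t))" by (rule sqrt_sum_le[OF Ex0 Ey0])
  also have "\<dots> = sqrt (2 * Q t)" using QE[OF t(1)] by simp
  also have "\<dots> \<le> sqrt (2 * (2 * Q0))" using \<open>Q t \<le> 2 * Q0\<close> by simp
  also have "\<dots> = 2 * sqrt Q0" by (simp add: real_sqrt_mult)
  also have "\<dots> \<le> 2 * N0" using sQ0 by simp
  finally show ?thesis by (simp add: N0_def)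
qed

theorem proposition4p2:
  fixes \<omega> :: "real \<times> real" and s1 s2 :: real
  assumes "incommensurable \<omega>"
    and "1/2 < s2" and "s2 \<le> 1"
    and "s1 > 3 * s2 / (2 * s2 - 1)"
  shows "(\<exists>Tf :: real \<Rightarrow> real. (\<forall>r. 0 < Tf r) \<and>
           (\<forall>u0 \<delta> u. u0 \<in> Hspace \<omega> s1 s2 \<longrightarrow> realvalued u0 \<longrightarrow> admissible_delta \<delta> \<longrightarrow>
              reg_family \<omega> s1 s2 \<delta> u0 u \<longrightarrow>
              (\<forall>n\<ge>1. \<forall>t\<in>{0..Tf (Hnorm \<omega> s1 s2 u0)}.
                  Hnorm \<omega> s1 s2 (u n t) \<le> 2 * Hnorm \<omega> s1 s2 u0)))
       \<and> (\<forall>K. Hcompact \<omega> s1 s2 K \<longrightarrow>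
           (\<exists>T>0. \<forall>u0\<in>K. \<forall>\<delta> u. realvalued u0 \<longrightarrow> admissible_delta \<delta> \<longrightarrow>
              reg_family \<omega> s1 s2 \<delta> u0 u \<longrightarrow>
              (\<forall>n\<ge>1. \<forall>t\<in>{0..T}. Hnorm \<omega> s1 s2 (u n t) \<le> 2 * Hnorm \<omega> s1 s2 u0)))"
proof -
  note inc = assms(1)
  have s2: "1/2 < s2" "s2 \<le> 1" using assms(2,3) by auto
  have d: "2 * s2 - 1 > 0" using s2 by simp
  have "3 * s2 / (2 * s2 - 1) \<ge> 1" using d s2 by (simp add: le_divide_eq)
  then have s1: "s1 \<ge> 1" using assms(4) by linarith
  obtain C0 where C0: "C0 \<ge> 0" and hC0: "\<And>F (v::coeffs). finite F \<Longrightarrow> (\<Sum>k\<in>F. \<bar>wdot \<omega> k\<bar> * cmod (v k))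
         \<le> C0 * sqrt (\<Sum>k\<in>F. (jbr (wdot \<omega> k) powr (2 * s1) + jbr (wpdot \<omega> k) powr (2 * s2)) * (cmod (v k))\<^sup>2)"
    using xi_l1_bound[OF inc assms(2,3,4)] by blast
  define Cst where "Cst = 4 * pi * (4 * (s1 * 2 powr (s1 - 1) + 1) + 1) * C0 + 1"
  have Cpos: "Cst > 0" unfolding Cst_def using C0 s1 by (intro add_nonneg_pos mult_nonneg_nonneg) auto
  define Tf where "Tf r = 1 / (8 * Cst * (\<bar>r\<bar> + 1))" for r :: real
  have Tfpos: "\<forall>r. 0 < Tf r" using Cpos by (simp add: Tf_def add_pos_nonneg)
  have main: "Hnorm \<omega> s1 s2 (u n t) \<le> 2 * Hnorm \<omega> s1 s2 u0"
    if u0H: "u0 \<in> Hspace \<omega> s1 s2" and u0r: "realvalued u0" and fam: "reg_family \<omega> s1 s2 \<delta> u0 u"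
      and n: "n \<ge> 1" and t: "0 \<le> t" "t \<le> 1 / (8 * Cst * (Hnorm \<omega> s1 s2 u0 + 1))" for u0 \<delta> u n t
  proof -
    have sol: "is_reg_solution \<omega> n (Pqr \<omega> (\<delta> n powr (1 / s1)) (\<delta> n powr (1 / s2)) u0) (u n)"
      using fam n by (simp add: reg_family_def)
    show ?thesis
      by (rule main_bound[OF inc s2 s1 C0 hC0 u0H u0r sol Cst_def t])
  qed
  show ?thesis
  proof (intro conjI allI impI)
    show "\<exists>Tf :: real \<Rightarrow> real. (\<forall>r. 0 < Tf r) \<and>
           (\<forall>u0 \<delta> u. u0 \<in> Hspace \<omega> s1 s2 \<longrightarrow> realvalued u0 \<longrightarrow> admissible_delta \<delta> \<longrightarrow>
              reg_family \<omega> s1 s2 \<delta> u0 u \<longrightarrow>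
              (\<forall>n\<ge>1. \<forall>t\<in>{0..Tf (Hnorm \<omega> s1 s2 u0)}.
                  Hnorm \<omega> s1 s2 (u n t) \<le> 2 * Hnorm \<omega> s1 s2 u0))"
    proof (intro exI[of _ Tf] conjI allI impI ballI Tfpos)
      fix u0 :: coeffs and \<delta> :: "nat \<Rightarrow> real" and u :: "nat \<Rightarrow> real \<Rightarrow> coeffs" and n :: nat and t :: real
      assume u0H: "u0 \<in> Hspace \<omega> s1 s2" and u0r: "realvalued u0" and "admissible_delta \<delta>"
        and fam: "reg_family \<omega> s1 s2 \<delta> u0 u" and n: "1 \<le> n" and t: "t \<in> {0..Tf (Hnorm \<omega> s1 s2 u0)}"
      have "\<bar>Hnorm \<omega> s1 s2 u0\<bar> = Hnorm \<omega> s1 s2 u0" using Hnorm_nonneg by simp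
      then have "0 \<le> t" "t \<le> 1 / (8 * Cst * (Hnorm \<omega> s1 s2 u0 + 1))" using t by (simp_all add: Tf_def)
      then show "Hnorm \<omega> s1 s2 (u n t) \<le> 2 * Hnorm \<omega> s1 s2 u0"
        by (rule main[OF u0H u0r fam n])
    qed (use Tfpos in auto)
  next
    fix K assume K: "Hcompact \<omega> s1 s2 K"
    obtain B where B: "\<And>a. a \<in> K \<Longrightarrow> Hnorm \<omega> s1 s2 a \<le> B" using Hcompact_bounded[OF K] by blast
    define B' where "B' = max B 0"
    have KH: "K \<subseteq> Hspace \<omega> s1 s2" using K by (simp add: Hcompact_def)
    show "\<exists>T>0. \<forall>u0\<in>K. \<forall>\<delta> u. realvalued u0 \<longrightarrow> admissible_delta \<delta> \<longrightarrow>
              reg_family \<omega> s1 s2 \<delta> u0 u \<longrightarrow>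
              (\<forall>n\<ge>1. \<forall>t\<in>{0..T}. Hnorm \<omega> s1 s2 (u n t) \<le> 2 * Hnorm \<omega> s1 s2 u0)"
    proof (intro exI[of _ "Tf B'"] conjI ballI allI impI)
      show "0 < Tf B'" using Tfpos by simp
      fix u0 :: coeffs and \<delta> :: "nat \<Rightarrow> real" and u :: "nat \<Rightarrow> real \<Rightarrow> coeffs" and n :: nat and t :: real
      assume u0K: "u0 \<in> K" and u0r: "realvalued u0" and "admissible_delta \<delta>"
        and fam: "reg_family \<omega> s1 s2 \<delta> u0 u" and n: "1 \<le> n" and t: "t \<in> {0..Tf B'}"
      have N0: "Hnorm \<omega> s1 s2 u0 \<le> B'" using B[OF u0K] by (simp add: B'_def)
      have B'0: "B' \<ge> 0" by (simp add: B'_def)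
      have N0nn: "Hnorm \<omega> s1 s2 u0 \<ge> 0" by (rule Hnorm_nonneg)
      have "t \<le> 1 / (8 * Cst * (B' + 1))" using t B'0 by (simp add: Tf_def)
      also have "\<dots> \<le> 1 / (8 * Cst * (Hnorm \<omega> s1 s2 u0 + 1))"
        using N0 N0nn Cpos by (intro divide_left_mono mult_left_mono mult_pos_pos) auto
      finally have t2: "t \<le> 1 / (8 * Cst * (Hnorm \<omega> s1 s2 u0 + 1))" .
      have "0 \<le> t" using t by simp
      then show "Hnorm \<omega> s1 s2 (u n t) \<le> 2 * Hnorm \<omega> s1 s2 u0"
        using main[OF _ u0r fam n _ t2] KH u0K by blast
    qed
  qed
qed

end
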